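(* Let $\Omega\subset\mathbb{R}^d$ be a bounded open set, let $q\ge 1$ be an integer, let $\lambda\in\mathbb{R}\setminus\{0\}$, let $k\in C^q(\overline{\Omega}\times\overline{\Omega})$ and let $f\in C^q(\overline{\Omega})$ be a nonzero function. Assume: (1) $\lambda$ does not belong to the spectrum of the integral operator $\mathcal{K}\colon C^0(\overline{\Omega})\to C^0(\overline{\Omega})$, $(\mathcal{K}v)(x)=\int_\Omega k(x,y)v(y)\,dy$; let $u\in C^q(\overline{\Omega})$ denote the unique solution of $\lambda u(x)-\int_\Omega k(x,y)u(y)\,dy=f(x)$, $x\in\Omega$. (2) The quadrature scheme $\{(Y_{\vec h},\vec w_{\vec h})\}$ is stable with constant $C_Q$ and convergent with order $q_w$, where $0<q_w\le q$, with constant $C_w$. (3) The reconstruction scheme $\{(X_{\vec h},Y_{\vec h},R_{\vec h})\}$ is stable and convergent with order $q_R$, where $0<q_R\le q$, with constant $C_R$. Then there exist $\delta>0$ and a constant $C>0$ independent of $h_X,h_Y$ such that for all $h_X,h_Y\in(0,\delta)$: the linear system \[ A_{\vec h}\hat{\vec u}_{\vec h}:=(\lambda I_{\vec h}-K_{\vec h}W_{\vec h}R_{\vec h})\hat{\vec u}_{\vec h}=f|_{X_{\vec h}} \] has a unique solution; the condition number of $A_{\vec h}$ in the $\infty$-norm is bounded independently of $\vec h$; and the Nyström interpolant \[ u_{\vec h}(x)=\frac{1}{\lambda}\Big(\sum_{i=1}^{|Y_{\vec h}|} w_{\vec h,i}\,k(x,y_{\vec h,i})\sum_{j=1}^{|X_{\vec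 h}|}(R_{\vec h})_{ij}\hat u_{\vec h,j}+f(x)\Big) \] satisfies \[ \|u-u_{\vec h}\|_\infty\le C\Big(C_w\,\max_{x\in\overline{\Omega}}\|k(x,\cdot)\|_{C^q(\overline{\Omega})}\,h_Y^{q_w}+C_QC_R\,\|k\|_{C^0(\overline{\Omega}\times\overline{\Omega})}\,h_X^{q_R}\Big)\|u\|_{C^q(\overline{\Omega})}. \]
   Context: For an integer $m\ge0$, $C^m(\overline{\Omega})$ is the space of functions on $\Omega$ whose partial derivatives $\partial^\alpha v$, $|\alpha|\le m$, exist, are continuous on $\Omega$ and extend continuously to $\overline{\Omega}$, normed by $\|v\|_{C^m(\overline{\Omega})}=\sum_{|\alpha|\le m}\frac{1}{\alpha!}\max_{x\in\overline{\Omega}}|\partial^\alpha v(x)|$ (multi-index notation, $\alpha!=\prod\alpha_i!$); $\|v\|_\infty=\max_{\overline\Omega}|v|$, and $\|k\|_{C^0(\overline\Omega\times\overline\Omega)}=\max|k|$. Here $\vec h=(h_X,h_Y)$ with $h_X,h_Y>0$. A quadrature scheme is a family $\{(Y_{\vec h},\vec w_{\vec h})\}$ of finite node sets $Y_{\vec h}=\{y_{\vec h,i}\}\subset\overline{\Omega}$ and weights $\vec w_{\vec h}\in\mathbb{R}^{|Y_{\vec h}|}$ depending only on $h_Y$, with $|Y_{\vec h}|\to\infty$ as $h_Y\to0^+$. It is stable if $\|\vec w_{\vec h}\|_1\le C_Q$ for all $\vec h$, and convergent with order $q_w$ if $|\int_\Omega v-\sum_i w_{\vec h,i}v(y_{\vec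 h,i})|\le C_w h_Y^{q_w}\|v\|_{C^{q_w}(\overline{\Omega})}$ for all $\vec h$ and all $v\in C^{q_w}(\overline{\Omega})$. A reconstruction scheme is a family of triples $(X_{\vec h},Y_{\vec h},R_{\vec h})$, $h_X,h_Y>0$, where $X_{\vec h}=\{x_{\vec h,j}\}\subset\overline{\Omega}$ is a finite set depending only on $h_X$ (solution nodes), $Y_{\vec h}$ are the quadrature nodes above, and $R_{\vec h}$ is a real $|Y_{\vec h}|\times|X_{\vec h}|$ matrix. It is stable if $\|R_{\vec h}\|_\infty\le C_I$ (max absolute row sum) for all $\vec h$, and convergent with order $q_R$ if $\|v|_{Y_{\vec h}}-R_{\vec h}v|_{X_{\vec h}}\|_\infty\le C_R h_X^{q_R}\|v\|_{C^{q_R}(\overline{\Omega})}$ for all $\vec h$ and all $v\in C^{q_R}(\overline{\Omega})$, where $v|_S$ denotes the vector of values of $v$ at the points of $S$. $I_{\vec h}$ is the $|X_{\vec h}|\times|X_{\vec h}|$ identity, $(K_{\vec h})_{ij}=k(x_{\vec h,i},y_{\vec h,j})$, $W_{\vec h}=\mathrm{diag}(\vec w_{\vec h})$. *)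

theory Defs
  imports "HOL-Analysis.Analysis"
begin

definition pder :: "'a::euclidean_space \<Rightarrow> ('a \<Rightarrow> real) \<Rightarrow> 'a \<Rightarrow> real" where
  "pder b v x = deriv (\<lambda>t. v (x + t *\<^sub>R b)) 0"

fun CmExt :: "'a::euclidean_space set \<Rightarrow> nat \<Rightarrow> ('a \<Rightarrow> real) \<Rightarrow> bool" where
  "CmExt \<Omega> 0 v = (\<exists>g. continuous_on (closure \<Omega>) g \<and> (\<forall>x\<in>\<Omega>. g x = v x))"
| "CmExt \<Omega> (Suc m) v = (CmExt \<Omega> 0 v
      \<and> (\<forall>b\<in>Basis. \<forall>x\<in>\<Omega>. (\<lambda>t. v (x + t *\<^sub>R b)) differentiable (at 0))
      \<and> (\<forall>b\<in>Basis. CmExt \<Omega> m (pder b v)))"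

definition Cm :: "'a::euclidean_space set \<Rightarrow> nat \<Rightarrow> ('a \<Rightarrow> real) \<Rightarrow> bool" where
  "Cm \<Omega> m v \<longleftrightarrow> continuous_on (closure \<Omega>) v \<and> CmExt \<Omega> m v"

definition basis_list :: "'a::euclidean_space list" where
  "basis_list = (SOME xs. distinct xs \<and> set xs = Basis)"

text \<open>Multi-index derivative (multi-indices are functions Basis -> nat, zero off Basis).\<close>
definition dpart :: "('a::euclidean_space \<Rightarrow> nat) \<Rightarrow> ('a \<Rightarrow> real) \<Rightarrow> 'a \<Rightarrow> real" where
  "dpart \<alpha> v = fold (\<lambda>b g. (pder b ^^ \<alpha> b) g) basis_list v"

definition mindex :: "nat \<Rightarrow> ('a::euclidean_space \<Rightarrow> nat) set" where
  "mindex m = {\<alpha>. (\<forall>b. b \<notin> Basis \<longrightarrow> \<alpha> b = 0) \<and> (\<Sum>b\<in>Basis. \<alpha> b) \<le> m}"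

text \<open>The C^m(closure Omega) norm; the max over closure Omega of the continuous extension of
  a derivative equals its sup over Omega.\<close>
definition cmnorm :: "'a::euclidean_space set \<Rightarrow> nat \<Rightarrow> ('a \<Rightarrow> real) \<Rightarrow> real" where
  "cmnorm \<Omega> m v = (\<Sum>\<alpha>\<in>mindex m.
      (1 / real (\<Prod>b\<in>Basis. fact (\<alpha> b))) * (SUP x\<in>\<Omega>. \<bar>dpart \<alpha> v x\<bar>))"

definition intop :: "'a::euclidean_space set \<Rightarrow> ('a \<times> 'a \<Rightarrow> real) \<Rightarrow> real \<Rightarrow> ('a \<Rightarrow> real) \<Rightarrow> 'a \<Rightarrow> real" where
  "intop \<Omega> k lam v = (\<lambda>x. lam * v x - integral \<Omega> (\<lambda>y. k (x, y) * v y))"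

definition sup_norm :: "'a set \<Rightarrow> ('a \<Rightarrow> real) \<Rightarrow> real" where
  "sup_norm S v = (SUP x\<in>S. \<bar>v x\<bar>)"

definition notin_spectrum :: "'a::euclidean_space set \<Rightarrow> ('a \<times> 'a \<Rightarrow> real) \<Rightarrow> real \<Rightarrow> bool" where
  "notin_spectrum \<Omega> k lam \<longleftrightarrow>
     (\<forall>g. continuous_on (closure \<Omega>) g \<longrightarrow>
        (\<exists>v. continuous_on (closure \<Omega>) v \<and> (\<forall>x\<in>closure \<Omega>. intop \<Omega> k lam v x = g x)))
   \<and> (\<forall>v. continuous_on (closure \<Omega>) v \<and> (\<forall>x\<in>closure \<Omega>. intop \<Omega> k lam v x = 0)
        \<longrightarrow> (\<forall>x\<in>closure \<Omega>. v x = 0))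
   \<and> (\<exists>M. \<forall>v. continuous_on (closure \<Omega>) v \<longrightarrow>
        sup_norm (closure \<Omega>) v \<le> M * sup_norm (closure \<Omega>) (intop \<Omega> k lam v))"

definition mat_inf_norm :: "nat \<Rightarrow> nat \<Rightarrow> (nat \<Rightarrow> nat \<Rightarrow> real) \<Rightarrow> real" where
  "mat_inf_norm m n A = Max (insert 0 {(\<Sum>j<n. \<bar>A i j\<bar>) | i. i < m})"

definition is_inverse :: "nat \<Rightarrow> (nat \<Rightarrow> nat \<Rightarrow> real) \<Rightarrow> (nat \<Rightarrow> nat \<Rightarrow> real) \<Rightarrow> bool" where
  "is_inverse n A B \<longleftrightarrow> (\<forall>i<n. \<forall>j<n.
      (\<Sum>l<n. A i l * B l j) = (if i = j then 1 else 0) \<and>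
      (\<Sum>l<n. B i l * A l j) = (if i = j then 1 else 0))"

definition cond_inf :: "nat \<Rightarrow> (nat \<Rightarrow> nat \<Rightarrow> real) \<Rightarrow> real" where
  "cond_inf n A = mat_inf_norm n n A * mat_inf_norm n n (SOME B. is_inverse n A B)"

text \<open>A = lam I - K W R, with K_il = k(x_i, y_l), W = diag w.\<close>
definition sysmat :: "real \<Rightarrow> ('a \<times> 'a \<Rightarrow> real) \<Rightarrow> (nat \<Rightarrow> 'a) \<Rightarrow> (nat \<Rightarrow> 'a) \<Rightarrow> nat
    \<Rightarrow> (nat \<Rightarrow> real) \<Rightarrow> (nat \<Rightarrow> nat \<Rightarrow> real) \<Rightarrow> nat \<Rightarrow> nat \<Rightarrow> real" where
  "sysmat lam k Xs Ys nYs ws Rm = (\<lambda>i j.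
     (if i = j then lam else 0) - (\<Sum>l<nYs. k (Xs i, Ys l) * ws l * Rm l j))"

definition nystrom :: "real \<Rightarrow> ('a \<times> 'a \<Rightarrow> real) \<Rightarrow> ('a \<Rightarrow> real) \<Rightarrow> (nat \<Rightarrow> 'a) \<Rightarrow> nat
    \<Rightarrow> nat \<Rightarrow> (nat \<Rightarrow> real) \<Rightarrow> (nat \<Rightarrow> nat \<Rightarrow> real) \<Rightarrow> (nat \<Rightarrow> real) \<Rightarrow> 'a \<Rightarrow> real" where
  "nystrom lam k f Ys nYs nXs ws Rm uh = (\<lambda>x.
     (1 / lam) * ((\<Sum>i<nYs. ws i * k (x, Ys i) * (\<Sum>j<nXs. Rm i j * uh j)) + f x))"

end

theory Submission
  imports Defs "Jordan_Normal_Form.Determinant"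
begin

lemma is_inverse_norm_bound:
  fixes A B :: "nat \<Rightarrow> nat \<Rightarrow> real"
  assumes M0: "0 \<le> M"
  and stab: "\<And>c T. 0 \<le> T \<Longrightarrow> (\<forall>i<n. \<bar>\<Sum>j<n. A i j * c j\<bar> \<le> T) \<Longrightarrow> (\<forall>j<n. \<bar>c j\<bar> \<le> M * T)"
  and inv: "is_inverse n A B"
  shows "mat_inf_norm n n B \<le> M"
proof -
  have row: "(\<Sum>j<n. \<bar>B i j\<bar>) \<le> M" if i: "i < n" for i
  proof -
    define \<tau> where "\<tau> = (\<lambda>j. sgn (B i j))"
    define c where "c = (\<lambda>l. \<Sum>j<n. B l j * \<tau> j)"
    have "\<bar>\<Sum>l<n. A i' l * c l\<bar> \<le> 1" if "i' < n" for i'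
    proof -
      have "(\<Sum>l<n. A i' l * c l) = (\<Sum>l<n. \<Sum>j<n. A i' l * B l j * \<tau> j)"
        unfolding c_def by (simp add: sum_distrib_left mult.assoc)
      also have "\<dots> = (\<Sum>j<n. \<Sum>l<n. A i' l * B l j * \<tau> j)" by (rule sum.swap)
      also have "\<dots> = (\<Sum>j<n. (\<Sum>l<n. A i' l * B l j) * \<tau> j)" by (simp add: sum_distrib_right)
      also have "\<dots> = (\<Sum>j<n. (if i' = j then 1 else 0) * \<tau> j)"
        using inv that unfolding is_inverse_def by (intro sum.cong) auto
      also have "\<dots> = (\<Sum>j<n. if i' = j then \<tau> j else 0)" by (intro sum.cong) auto
      also have "\<dots> = \<tau> i'" using that by simp
      finally show ?thesis by (simp add: \<tau>_def abs_sgn_eq)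
    qed
    then have "\<bar>c i\<bar> \<le> M * 1" using stab[of 1 c] i by auto
    moreover have "c i = (\<Sum>j<n. \<bar>B i j\<bar>)" unfolding c_def \<tau>_def
      by (intro sum.cong refl) (metis abs_mult_sgn abs_sgn mult.commute sgn_mult_abs)
    ultimately show ?thesis by (simp add: sum_nonneg)
  qed
  have fin: "finite {(\<Sum>j<n. \<bar>B i j\<bar>) | i. i < n}" by simp
  show ?thesis unfolding mat_inf_norm_def
    using row M0 fin by (subst Max_le_iff) auto
qed

lemma inverse_exists:
  fixes A :: "nat \<Rightarrow> nat \<Rightarrow> real"
  assumes stab: "\<And>c. (\<forall>i<n. (\<Sum>j<n. A i j * c j) = 0) \<Longrightarrow> (\<forall>j<n. c j = 0)"
  shows "\<exists>B. is_inverse n A B"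
proof -
  define A' where "A' = mat n n (\<lambda>(i,j). A i j)"
  have A'c: "A' \<in> carrier_mat n n" unfolding A'_def by simp
  have "Determinant.det A' \<noteq> 0"
  proof
    assume "Determinant.det A' = 0"
    then obtain v where v: "v \<in> carrier_vec n" "v \<noteq> 0\<^sub>v n" "A' *\<^sub>v v = 0\<^sub>v n"
      using det_0_iff_vec_prod_zero[OF A'c] by blast
    have "\<forall>i<n. (\<Sum>j<n. A i j * v $ j) = 0"
    proof (intro allI impI)
      fix i assume i: "i < n"
      have "(A' *\<^sub>v v) $ i = 0" using v(3) i by simp
      then show "(\<Sum>j<n. A i j * v $ j) = 0"
        using i v(1) unfolding A'_def by (simp add: mult_mat_vec_def scalar_prod_def row_def atLeast0LessThan)
    qed
    then have "\<forall>j<n. v $ j = 0" using stab[of "\<lambda>j. v $ j"] by blast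
    then have "v = 0\<^sub>v n" using v(1) by (intro eq_vecI) auto
    with v(2) show False by simp
  qed
  then have "A' \<in> Units (ring_mat TYPE(real) n ())"
    by (rule det_non_zero_imp_unit[OF A'c])
  then obtain B' where B': "B' \<in> carrier_mat n n" "B' * A' = 1\<^sub>m n" "A' * B' = 1\<^sub>m n"
    unfolding Units_def ring_mat_def by auto
  define B where "B = (\<lambda>i j. B' $$ (i,j))"
  have "is_inverse n A B" unfolding is_inverse_def
  proof (intro allI impI conjI)
    fix i j assume ij: "i < n" "j < n"
    have "(A' * B') $$ (i,j) = (if i = j then 1 else 0)" using B'(3) ij by simp
    then show "(\<Sum>l<n. A i l * B l j) = (if i = j then 1 else 0)"
      using ij B'(1) unfolding A'_def B_def
      by (simp add: scalar_prod_def row_def col_def atLeast0LessThan)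
    have "(B' * A') $$ (i,j) = (if i = j then 1 else 0)" using B'(2) ij by simp
    then show "(\<Sum>l<n. B i l * A l j) = (if i = j then 1 else 0)"
      using ij B'(1) unfolding A'_def B_def
      by (simp add: scalar_prod_def row_def col_def atLeast0LessThan)
  qed
  then show ?thesis by blast
qed

lemma ev_line_in_open:
  fixes x b :: "'a::real_normed_vector"
  assumes "open S" "x \<in> S"
  shows "eventually (\<lambda>t::real. x + t *\<^sub>R b \<in> S) (nhds 0)"
proof -
  have c: "\<And>t. continuous (at t) (\<lambda>t::real. x + t *\<^sub>R b)" by (intro continuous_intros)
  have "open ((\<lambda>t::real. x + t *\<^sub>R b) -` S)"
    by (rule continuous_open_vimage[OF assms(1) c])
  moreover have "(0::real) \<in> (\<lambda>t. x + t *\<^sub>R b) -` S" using assms by simp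
  ultimately show ?thesis unfolding eventually_nhds by blast
qed

lemma pder_cong:
  fixes v v' :: "'a::euclidean_space \<Rightarrow> real"
  assumes "open S" "x \<in> S" "\<forall>y\<in>S. v y = v' y"
  shows "pder b v x = pder b v' x"
proof -
  have "eventually (\<lambda>t::real. x + t *\<^sub>R b \<in> S) (nhds 0)" using ev_line_in_open assms(1,2) by blast
  then have "eventually (\<lambda>t. v (x + t *\<^sub>R b) = v' (x + t *\<^sub>R b)) (nhds 0)"
    by (rule eventually_mono) (use assms(3) in auto)
  then show ?thesis unfolding pder_def by (rule deriv_cong_ev) simp
qed

lemma diff_cong:
  fixes v v' :: "'a::euclidean_space \<Rightarrow> real"
  assumes "open S" "x \<in> S" "\<forall>y\<in>S. v y = v' y"
    and "(\<lambda>t. v (x + t *\<^sub>R b)) differentiable (at 0)"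
  shows "(\<lambda>t. v' (x + t *\<^sub>R b)) differentiable (at 0)"
proof -
  have "eventually (\<lambda>t::real. x + t *\<^sub>R b \<in> S) (nhds 0)" using ev_line_in_open assms(1,2) by blast
  then have ev: "eventually (\<lambda>t. v (x + t *\<^sub>R b) = v' (x + t *\<^sub>R b)) (nhds 0)"
    by (rule eventually_mono) (use assms(3) in auto)
  from assms(4) obtain D where "((\<lambda>t. v (x + t *\<^sub>R b)) has_real_derivative D) (at 0)"
    using DERIV_deriv_iff_real_differentiable by blast
  then have "((\<lambda>t. v' (x + t *\<^sub>R b)) has_real_derivative D) (at 0)"
    using DERIV_cong_ev[OF refl ev refl] by blast
  then show ?thesis using real_differentiable_def by blast
qed


fun UCm :: "'a::euclidean_space set \<Rightarrow> 'p set \<Rightarrow> nat \<Rightarrow> ('p \<Rightarrow> 'a \<Rightarrow> real) \<Rightarrow> bool" where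
  "UCm S P 0 F = ((\<exists>B. \<forall>p\<in>P. \<forall>x\<in>S. \<bar>F p x\<bar> \<le> B) \<and> (\<forall>p\<in>P. CmExt S 0 (F p)))"
| "UCm S P (Suc m) F = (UCm S P 0 F
      \<and> (\<forall>p\<in>P. \<forall>b\<in>Basis. \<forall>x\<in>S. (\<lambda>t. F p (x + t *\<^sub>R b)) differentiable (at 0))
      \<and> (\<forall>b\<in>Basis. UCm S P m (\<lambda>p. pder b (F p))))"

lemma UCm_0: "UCm S P m F \<Longrightarrow> UCm S P 0 F"
  by (cases m) auto

lemma UCm_CmExt: "UCm S P m F \<Longrightarrow> p \<in> P \<Longrightarrow> CmExt S m (F p)"
proof (induction m arbitrary: F)
  case 0 then show ?case by simp
next
  case (Suc m)
  have "CmExt S m (pder b (F p))" if "b \<in> Basis" for b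
    using Suc.IH[of "\<lambda>p. pder b (F p)"] Suc.prems that by auto
  then show ?case using Suc.prems by auto
qed

lemma UCm_Suc_mono: "UCm S P (Suc m) F \<Longrightarrow> UCm S P m F"
proof (induction m arbitrary: F)
  case 0 then show ?case by simp
next
  case (Suc m)
  have "UCm S P m (\<lambda>p. pder b (F p))" if "b \<in> Basis" for b
    using Suc.IH[of "\<lambda>p. pder b (F p)"] Suc.prems that by simp
  then show ?case using Suc.prems by simp
qed

lemma UCm_mono: "UCm S P m F \<Longrightarrow> m' \<le> m \<Longrightarrow> UCm S P m' F"
proof (induction m)
  case 0 then show ?case by simp
next
  case (Suc m)
  show ?case
  proof (cases "m' = Suc m")
    case True then show ?thesis using Suc.prems by simp
  next
    case False
    then have "m' \<le> m" using Suc.prems by simp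
    then show ?thesis using Suc.IH UCm_Suc_mono Suc.prems(1) by blast
  qed
qed

lemma CmExt_cong:
  assumes "open S" "CmExt S m v" "\<forall>x\<in>S. v x = v' x"
  shows "CmExt S m v'"
  using assms(2,3)
proof (induction m arbitrary: v v')
  case 0 then show ?case by auto
next
  case (Suc m)
  have "CmExt S m (pder b v')" if "b \<in> Basis" for b
  proof -
    have "\<forall>x\<in>S. pder b v x = pder b v' x" using pder_cong[OF assms(1)] Suc.prems(2) by blast
    moreover have "CmExt S m (pder b v)" using Suc.prems(1) that by simp
    ultimately show ?thesis using Suc.IH by blast
  qed
  moreover have "(\<lambda>t. v' (x + t *\<^sub>R b)) differentiable (at 0)" if "b \<in> Basis" "x \<in> S" for b x
    using diff_cong[OF assms(1) that(2), of v v' b] Suc.prems that by simp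
  moreover have "CmExt S 0 v'" using Suc.prems by auto
  ultimately show ?case by simp
qed

lemma UCm_cong:
  assumes "open S" "UCm S P m F" "\<forall>p\<in>P. \<forall>x\<in>S. F p x = G p x"
  shows "UCm S P m G"
  using assms(2,3)
proof (induction m arbitrary: F G)
  case 0
  from 0 obtain B where "\<forall>p\<in>P. \<forall>x\<in>S. \<bar>F p x\<bar> \<le> B" by auto
  then have "\<forall>p\<in>P. \<forall>x\<in>S. \<bar>G p x\<bar> \<le> B" using 0 by simp
  moreover have "\<forall>p\<in>P. CmExt S 0 (G p)"
  proof
    fix p assume "p \<in> P"
    then have "CmExt S 0 (F p)" "\<forall>x\<in>S. F p x = G p x" using 0 by auto
    then show "CmExt S 0 (G p)" by (rule CmExt_cong[OF assms(1)])
  qed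
  ultimately show ?case by auto
next
  case (Suc m)
  have "UCm S P m (\<lambda>p. pder b (G p))" if "b \<in> Basis" for b
  proof -
    have c1: "\<forall>p\<in>P. \<forall>x\<in>S. pder b (F p) x = pder b (G p) x" using pder_cong[OF assms(1)] Suc.prems(2) by blast
    have c2: "UCm S P m (\<lambda>p. pder b (F p))" using Suc.prems(1) that by simp
    show ?thesis by (rule Suc.IH[OF c2 c1])
  qed
  moreover have "(\<lambda>t. G p (x + t *\<^sub>R b)) differentiable (at 0)" if "p \<in> P" "b \<in> Basis" "x \<in> S" for p b x
    using diff_cong[OF assms(1) that(3), of "F p" "G p" b] Suc.prems that by simp
  moreover have "UCm S P 0 G"
  proof -
    have "UCm S P m F" using Suc.prems(1) by (rule UCm_Suc_mono)
    then have "UCm S P m G" using Suc.IH Suc.prems(2) by blast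
    then show ?thesis by (rule UCm_0)
  qed
  ultimately show ?case by simp
qed

lemma UCm_reindex:
  assumes "UCm S P m F" "\<pi> ` Q \<subseteq> P"
  shows "UCm S Q m (\<lambda>q. F (\<pi> q))"
  using assms(1)
proof (induction m arbitrary: F)
  case 0
  then obtain B where "\<forall>p\<in>P. \<forall>x\<in>S. \<bar>F p x\<bar> \<le> B" by auto
  then have "\<forall>q\<in>Q. \<forall>x\<in>S. \<bar>F (\<pi> q) x\<bar> \<le> B" using assms(2) by auto
  then show ?case using 0 assms(2) by auto
next
  case (Suc m)
  have "UCm S Q m (\<lambda>q. pder b (F (\<pi> q)))" if "b \<in> Basis" for b
    using Suc.IH[of "\<lambda>p. pder b (F p)"] Suc.prems that by simp
  moreover have "UCm S Q 0 (\<lambda>q. F (\<pi> q))"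
  proof -
    have "UCm S P m F" using Suc.prems by (rule UCm_Suc_mono)
    then show ?thesis using Suc.IH UCm_0 by blast
  qed
  moreover have "\<forall>q\<in>Q. \<pi> q \<in> P" using assms(2) by auto
  moreover have "\<forall>p\<in>P. \<forall>b\<in>Basis. \<forall>x\<in>S. (\<lambda>t. F p (x + t *\<^sub>R b)) differentiable (at 0)"
    using Suc.prems by simp
  ultimately show ?case by simp
qed

lemma pder_add:
  fixes F G :: "'a::euclidean_space \<Rightarrow> real"
  assumes "(\<lambda>t. F (x + t *\<^sub>R b)) differentiable (at 0)" "(\<lambda>t. G (x + t *\<^sub>R b)) differentiable (at 0)"
  shows "pder b (\<lambda>y. F y + G y) x = pder b F x + pder b G x"
    and "(\<lambda>t. F (x + t *\<^sub>R b) + G (x + t *\<^sub>R b)) differentiable (at 0)"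
proof -
  have d1: "((\<lambda>t. F (x + t *\<^sub>R b)) has_real_derivative pder b F x) (at 0)"
    using assms(1) DERIV_deriv_iff_real_differentiable unfolding pder_def by blast
  have d2: "((\<lambda>t. G (x + t *\<^sub>R b)) has_real_derivative pder b G x) (at 0)"
    using assms(2) DERIV_deriv_iff_real_differentiable unfolding pder_def by blast
  have d: "((\<lambda>t. F (x + t *\<^sub>R b) + G (x + t *\<^sub>R b)) has_real_derivative pder b F x + pder b G x) (at 0)"
    by (rule DERIV_add[OF d1 d2])
  then show "pder b (\<lambda>y. F y + G y) x = pder b F x + pder b G x"
    unfolding pder_def by (rule DERIV_imp_deriv)
  show "(\<lambda>t. F (x + t *\<^sub>R b) + G (x + t *\<^sub>R b)) differentiable (at 0)"
    using d real_differentiable_def by blast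
qed

lemma pder_mult:
  fixes F G :: "'a::euclidean_space \<Rightarrow> real"
  assumes "(\<lambda>t. F (x + t *\<^sub>R b)) differentiable (at 0)" "(\<lambda>t. G (x + t *\<^sub>R b)) differentiable (at 0)"
  shows "pder b (\<lambda>y. F y * G y) x = pder b F x * G x + F x * pder b G x"
    and "(\<lambda>t. F (x + t *\<^sub>R b) * G (x + t *\<^sub>R b)) differentiable (at 0)"
proof -
  have d1: "((\<lambda>t. F (x + t *\<^sub>R b)) has_real_derivative pder b F x) (at 0)"
    using assms(1) DERIV_deriv_iff_real_differentiable unfolding pder_def by blast
  have d2: "((\<lambda>t. G (x + t *\<^sub>R b)) has_real_derivative pder b G x) (at 0)"
    using assms(2) DERIV_deriv_iff_real_differentiable unfolding pder_def by blast
  have d: "((\<lambda>t. F (x + t *\<^sub>R b) * G (x + t *\<^sub>R b)) has_real_derivative pder b F x * G x + F x * pder b G x) (at 0)"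
    using DERIV_mult[OF d1 d2] by (simp add: mult.commute)
  then show "pder b (\<lambda>y. F y * G y) x = pder b F x * G x + F x * pder b G x"
    unfolding pder_def by (rule DERIV_imp_deriv)
  show "(\<lambda>t. F (x + t *\<^sub>R b) * G (x + t *\<^sub>R b)) differentiable (at 0)"
    using d real_differentiable_def by blast
qed

lemma UCm0_add:
  assumes "UCm S P 0 F" "UCm S P 0 G"
  shows "UCm S P 0 (\<lambda>p x. F p x + G p x)"
proof -
  obtain B1 where B1: "\<forall>p\<in>P. \<forall>x\<in>S. \<bar>F p x\<bar> \<le> B1" using assms(1) by auto
  obtain B2 where B2: "\<forall>p\<in>P. \<forall>x\<in>S. \<bar>G p x\<bar> \<le> B2" using assms(2) by auto
  have "\<forall>p\<in>P. \<forall>x\<in>S. \<bar>F p x + G p x\<bar> \<le> B1 + B2"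
    using B1 B2 by (smt (verit))
  moreover have "CmExt S 0 (\<lambda>x. F p x + G p x)" if "p \<in> P" for p
  proof -
    have "CmExt S 0 (F p)" using assms(1) that by simp
    then obtain g1 where g1: "continuous_on (closure S) g1" "\<forall>x\<in>S. g1 x = F p x" by auto
    have "CmExt S 0 (G p)" using assms(2) that by simp
    then obtain g2 where g2: "continuous_on (closure S) g2" "\<forall>x\<in>S. g2 x = G p x" by auto
    have "continuous_on (closure S) (\<lambda>x. g1 x + g2 x)" using g1 g2 by (intro continuous_intros)
    then show ?thesis using g1 g2 by auto
  qed
  ultimately show ?thesis by auto
qed

lemma UCm0_mult:
  assumes "UCm S P 0 F" "UCm S P 0 G"
  shows "UCm S P 0 (\<lambda>p x. F p x * G p x)"
proof -
  obtain B1 where B1: "\<forall>p\<in>P. \<forall>x\<in>S. \<bar>F p x\<bar> \<le> B1" using assms(1) by auto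
  obtain B2 where B2: "\<forall>p\<in>P. \<forall>x\<in>S. \<bar>G p x\<bar> \<le> B2" using assms(2) by auto
  have "\<forall>p\<in>P. \<forall>x\<in>S. \<bar>F p x * G p x\<bar> \<le> B1 * B2"
  proof (intro ballI)
    fix p x assume "p \<in> P" "x \<in> S"
    then have "\<bar>F p x\<bar> \<le> B1" "\<bar>G p x\<bar> \<le> B2" using B1 B2 by auto
    then show "\<bar>F p x * G p x\<bar> \<le> B1 * B2" unfolding abs_mult
      by (intro mult_mono) auto
  qed
  moreover have "CmExt S 0 (\<lambda>x. F p x * G p x)" if "p \<in> P" for p
  proof -
    have "CmExt S 0 (F p)" using assms(1) that by simp
    then obtain g1 where g1: "continuous_on (closure S) g1" "\<forall>x\<in>S. g1 x = F p x" by auto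
    have "CmExt S 0 (G p)" using assms(2) that by simp
    then obtain g2 where g2: "continuous_on (closure S) g2" "\<forall>x\<in>S. g2 x = G p x" by auto
    have "continuous_on (closure S) (\<lambda>x. g1 x * g2 x)" using g1 g2 by (intro continuous_intros)
    then show ?thesis using g1 g2 by auto
  qed
  ultimately show ?thesis by auto
qed

lemma UCm_add:
  fixes S :: "'a::euclidean_space set"
  assumes "open S" "UCm S P m F" "UCm S P m G"
  shows "UCm S P m (\<lambda>p x. F p x + G p x)"
  using assms(2,3)
proof (induction m arbitrary: F G)
  case 0 then show ?case by (rule UCm0_add)
next
  case (Suc m)
  have dF: "\<forall>p\<in>P. \<forall>b\<in>Basis. \<forall>x\<in>S. (\<lambda>t. F p (x + t *\<^sub>R b)) differentiable (at 0)" using Suc.prems(1) by simp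
  have dG: "\<forall>p\<in>P. \<forall>b\<in>Basis. \<forall>x\<in>S. (\<lambda>t. G p (x + t *\<^sub>R b)) differentiable (at 0)" using Suc.prems(2) by simp
  have "UCm S P m (\<lambda>p. pder b (\<lambda>x. F p x + G p x))" if b: "b \<in> Basis" for b
  proof -
    have c2: "UCm S P m (\<lambda>p x. pder b (F p) x + pder b (G p) x)"
      using Suc.IH[of "\<lambda>p. pder b (F p)" "\<lambda>p. pder b (G p)"] Suc.prems b by simp
    have c1: "\<forall>p\<in>P. \<forall>x\<in>S. pder b (F p) x + pder b (G p) x = pder b (\<lambda>x. F p x + G p x) x"
    proof (intro ballI)
      fix p x assume px: "p \<in> P" "x \<in> S"
      have "(\<lambda>t. F p (x + t *\<^sub>R b)) differentiable (at 0)" using dF px b by blast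
      moreover have "(\<lambda>t. G p (x + t *\<^sub>R b)) differentiable (at 0)" using dG px b by blast
      ultimately show "pder b (F p) x + pder b (G p) x = pder b (\<lambda>x. F p x + G p x) x"
        by (simp add: pder_add(1))
    qed
    show ?thesis by (rule UCm_cong[OF assms(1) c2 c1])
  qed
  moreover have "\<forall>p\<in>P. \<forall>b\<in>Basis. \<forall>x\<in>S. (\<lambda>t. F p (x + t *\<^sub>R b) + G p (x + t *\<^sub>R b)) differentiable (at 0)"
  proof (intro ballI)
    fix p and b :: 'a and x assume px: "p \<in> P" "b \<in> Basis" "x \<in> S"
    have "(\<lambda>t. F p (x + t *\<^sub>R b)) differentiable (at 0)" using dF px by blast
    moreover have "(\<lambda>t. G p (x + t *\<^sub>R b)) differentiable (at 0)" using dG px by blast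
    ultimately show "(\<lambda>t. F p (x + t *\<^sub>R b) + G p (x + t *\<^sub>R b)) differentiable (at 0)"
      by (rule pder_add(2))
  qed
  moreover have "UCm S P 0 (\<lambda>p x. F p x + G p x)"
    using UCm0_add[OF UCm_0[OF Suc.prems(1)] UCm_0[OF Suc.prems(2)]] .
  ultimately show ?case by simp
qed

lemma UCm_mult:
  fixes S :: "'a::euclidean_space set"
  assumes "open S" "UCm S P m F" "UCm S P m G"
  shows "UCm S P m (\<lambda>p x. F p x * G p x)"
  using assms(2,3)
proof (induction m arbitrary: F G)
  case 0 then show ?case by (rule UCm0_mult)
next
  case (Suc m)
  have dF: "\<forall>p\<in>P. \<forall>b\<in>Basis. \<forall>x\<in>S. (\<lambda>t. F p (x + t *\<^sub>R b)) differentiable (at 0)" using Suc.prems(1) by simp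
  have dG: "\<forall>p\<in>P. \<forall>b\<in>Basis. \<forall>x\<in>S. (\<lambda>t. G p (x + t *\<^sub>R b)) differentiable (at 0)" using Suc.prems(2) by simp
  have Fm: "UCm S P m F" using Suc.prems(1) by (rule UCm_Suc_mono)
  have Gm: "UCm S P m G" using Suc.prems(2) by (rule UCm_Suc_mono)
  have "UCm S P m (\<lambda>p. pder b (\<lambda>x. F p x * G p x))" if b: "b \<in> Basis" for b
  proof -
    have a1: "UCm S P m (\<lambda>p x. pder b (F p) x * G p x)"
      using Suc.IH[of "\<lambda>p. pder b (F p)" G] Suc.prems b Gm by simp
    have a2: "UCm S P m (\<lambda>p x. F p x * pder b (G p) x)"
      using Suc.IH[of F "\<lambda>p. pder b (G p)"] Suc.prems b Fm by simp
    have c2: "UCm S P m (\<lambda>p x. pder b (F p) x * G p x + F p x * pder b (G p) x)"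
      using UCm_add[OF assms(1) a1 a2] by simp
    have c1: "\<forall>p\<in>P. \<forall>x\<in>S. pder b (F p) x * G p x + F p x * pder b (G p) x = pder b (\<lambda>x. F p x * G p x) x"
    proof (intro ballI)
      fix p x assume px: "p \<in> P" "x \<in> S"
      have "(\<lambda>t. F p (x + t *\<^sub>R b)) differentiable (at 0)" using dF px b by blast
      moreover have "(\<lambda>t. G p (x + t *\<^sub>R b)) differentiable (at 0)" using dG px b by blast
      ultimately show "pder b (F p) x * G p x + F p x * pder b (G p) x = pder b (\<lambda>x. F p x * G p x) x"
        by (simp add: pder_mult(1))
    qed
    show ?thesis by (rule UCm_cong[OF assms(1) c2 c1])
  qed
  moreover have "\<forall>p\<in>P. \<forall>b\<in>Basis. \<forall>x\<in>S. (\<lambda>t. F p (x + t *\<^sub>R b) * G p (x + t *\<^sub>R b)) differentiable (at 0)"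
  proof (intro ballI)
    fix p and b :: 'a and x assume px: "p \<in> P" "b \<in> Basis" "x \<in> S"
    have "(\<lambda>t. F p (x + t *\<^sub>R b)) differentiable (at 0)" using dF px by blast
    moreover have "(\<lambda>t. G p (x + t *\<^sub>R b)) differentiable (at 0)" using dG px by blast
    ultimately show "(\<lambda>t. F p (x + t *\<^sub>R b) * G p (x + t *\<^sub>R b)) differentiable (at 0)"
      by (rule pder_mult(2))
  qed
  moreover have "UCm S P 0 (\<lambda>p x. F p x * G p x)"
    using UCm0_mult[OF UCm_0[OF Suc.prems(1)] UCm_0[OF Suc.prems(2)]] .
  ultimately show ?case by simp
qed

lemma CmExt0_bounded:
  assumes "bounded S" "CmExt S 0 v"
  shows "\<exists>B. \<forall>x\<in>S. \<bar>v x\<bar> \<le> B"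
proof -
  obtain g where g: "continuous_on (closure S) g" "\<forall>x\<in>S. g x = v x" using assms(2) by auto
  have "compact (closure S)" using assms(1) by (simp add: compact_closure)
  then have "bounded (g ` closure S)" using g(1) by (simp add: compact_continuous_image compact_imp_bounded)
  then obtain B where B: "\<forall>y\<in>g ` closure S. norm y \<le> B" unfolding bounded_iff by blast
  have "\<bar>v x\<bar> \<le> B" if "x \<in> S" for x
    using B g(2) that closure_subset[of S] by force
  then show ?thesis by blast
qed

lemma UCm_const:
  assumes "bounded S" "CmExt S m v"
  shows "UCm S P m (\<lambda>_. v)"
  using assms(2)
proof (induction m arbitrary: v)
  case 0 then show ?case using CmExt0_bounded[OF assms(1)] by auto
next
  case (Suc m)
  have "UCm S P m (\<lambda>_. pder b v)" if "b \<in> Basis" for b using Suc.IH[of "pder b v"] Suc.prems that by simp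
  moreover have "UCm S P 0 (\<lambda>_. v)" using Suc.prems CmExt0_bounded[OF assms(1), of v] by auto
  ultimately show ?case using Suc.prems by simp
qed

lemma basis_list_prop: "distinct (basis_list :: 'a::euclidean_space list) \<and> set basis_list = (Basis :: 'a set)"
proof -
  have "\<exists>xs. distinct xs \<and> set xs = (Basis :: 'a set)" using finite_distinct_list[OF finite_Basis] by blast
  then show ?thesis unfolding basis_list_def by (rule someI_ex)
qed

lemma funpow_pder_fold: "(pder b ^^ n) g = fold pder (replicate n b) g"
proof (induction n arbitrary: g)
  case 0 then show ?case by simp
next
  case (Suc n)
  have "(pder b ^^ Suc n) g = (pder b ^^ n) (pder b g)" by (simp add: funpow_Suc_right del: funpow.simps)
  also have "\<dots> = fold pder (replicate n b) (pder b g)" by (rule Suc.IH)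
  finally show ?case by simp
qed

lemma fold_concat_pder: "fold (\<lambda>b g. fold pder (L b) g) bl v = fold pder (concat (map L bl)) v"
  by (induction bl arbitrary: v) auto

definition dlist :: "('a \<Rightarrow> nat) \<Rightarrow> 'a list \<Rightarrow> 'a list" where
  "dlist \<alpha> bl = concat (map (\<lambda>b. replicate (\<alpha> b) b) bl)"

lemma dpart_fold: "dpart \<alpha> v = fold pder (dlist \<alpha> basis_list) v"
  unfolding dpart_def dlist_def funpow_pder_fold by (rule fold_concat_pder)

lemma dlist_set: "set (dlist \<alpha> (basis_list :: 'a::euclidean_space list)) \<subseteq> Basis"
proof
  fix x assume "x \<in> set (dlist \<alpha> (basis_list :: 'a list))"
  then obtain b where b: "b \<in> set (basis_list :: 'a list)" "x \<in> set (replicate (\<alpha> b) b)"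
    unfolding dlist_def by auto
  then have "x = b" by (simp split: if_splits)
  then show "x \<in> Basis" using b(1) basis_list_prop[where 'a='a] by simp
qed

lemma dlist_length: "\<alpha> \<in> mindex m \<Longrightarrow> length (dlist \<alpha> (basis_list :: 'a::euclidean_space list)) \<le> m"
proof -
  assume a: "\<alpha> \<in> mindex m"
  have "length (dlist \<alpha> (basis_list :: 'a list)) = sum_list (map \<alpha> basis_list)"
    unfolding dlist_def by (simp add: length_concat comp_def)
  also have "\<dots> = (\<Sum>b\<in>set (basis_list :: 'a list). \<alpha> b)"
    using basis_list_prop[where 'a='a] by (simp add: sum_list_distinct_conv_sum_set)
  also have "\<dots> = (\<Sum>b\<in>Basis. \<alpha> b)" using basis_list_prop[where 'a='a] by simp
  also have "\<dots> \<le> m" using a unfolding mindex_def by simp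
  finally show ?thesis .
qed

lemma UCm_fold_bound:
  assumes "UCm S P m F" "set bs \<subseteq> Basis" "length bs \<le> m"
  shows "\<exists>B. \<forall>p\<in>P. \<forall>x\<in>S. \<bar>fold pder bs (F p) x\<bar> \<le> B"
  using assms
proof (induction bs arbitrary: m F)
  case Nil then show ?case using UCm_0[OF Nil.prems(1)] by auto
next
  case (Cons b bs)
  then obtain m' where m: "m = Suc m'" by (cases m) auto
  have "UCm S P m' (\<lambda>p. pder b (F p))" using Cons.prems m by simp
  then have "\<exists>B. \<forall>p\<in>P. \<forall>x\<in>S. \<bar>fold pder bs (pder b (F p)) x\<bar> \<le> B"
    using Cons.IH[of m' "\<lambda>p. pder b (F p)"] Cons.prems m by simp
  then show ?case by simp
qed

lemma UCm_dpart_bound: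
  assumes "UCm S P m F" "\<alpha> \<in> mindex m"
  shows "\<exists>B. \<forall>p\<in>P. \<forall>x\<in>S. \<bar>dpart \<alpha> (F p) x\<bar> \<le> B"
  unfolding dpart_fold using UCm_fold_bound[OF assms(1) dlist_set dlist_length[OF assms(2)]] .

lemma finite_mindex: "finite (mindex m :: ('a::euclidean_space \<Rightarrow> nat) set)"
proof -
  have "inj_on (\<lambda>\<alpha>. restrict \<alpha> Basis) (mindex m :: ('a \<Rightarrow> nat) set)"
  proof
    fix \<alpha> \<beta> :: "'a \<Rightarrow> nat" assume "\<alpha> \<in> mindex m" "\<beta> \<in> mindex m" "restrict \<alpha> Basis = restrict \<beta> Basis"
    then have h: "\<forall>b. b \<notin> Basis \<longrightarrow> \<alpha> b = 0" "\<forall>b. b \<notin> Basis \<longrightarrow> \<beta> b = 0"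
      "\<forall>b\<in>Basis. \<alpha> b = \<beta> b" unfolding mindex_def restrict_def by (auto simp: fun_eq_iff split: if_splits)
    show "\<alpha> = \<beta>"
    proof
      fix b show "\<alpha> b = \<beta> b" using h by (cases "b \<in> Basis") auto
    qed
  qed
  moreover have "(\<lambda>\<alpha>. restrict \<alpha> Basis) ` (mindex m :: ('a \<Rightarrow> nat) set) \<subseteq> PiE Basis (\<lambda>_. {..m})"
  proof
    fix f assume "f \<in> (\<lambda>\<alpha>. restrict \<alpha> Basis) ` (mindex m :: ('a \<Rightarrow> nat) set)"
    then obtain \<alpha> where a: "\<alpha> \<in> mindex m" "f = restrict \<alpha> Basis" by auto
    have "\<alpha> b \<le> m" if "b \<in> Basis" for b
    proof -
      have "\<alpha> b \<le> (\<Sum>b\<in>Basis. \<alpha> b)" using that by (intro member_le_sum) auto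
      then show ?thesis using a(1) unfolding mindex_def by simp
    qed
    then show "f \<in> PiE Basis (\<lambda>_. {..m})" using a(2) by auto
  qed
  moreover have "finite (PiE (Basis :: 'a set) (\<lambda>_. {..m}))" by (intro finite_PiE) auto
  ultimately show ?thesis using finite_imageD finite_subset by blast
qed

lemma zero_mindex: "(\<lambda>_. 0) \<in> mindex m" unfolding mindex_def by simp

lemma dpart_zero: "dpart (\<lambda>_. 0) v = v"
proof -
  have "dlist (\<lambda>_. 0) bl = []" for bl :: "'a list" by (induction bl) (auto simp: dlist_def)
  then show ?thesis unfolding dpart_fold by simp
qed

lemma prod_fact_pos: "0 < (\<Prod>x\<in>A. (fact (\<alpha> x) :: real))"
  by (rule prod_pos) simp

lemma coeff_nonneg: "0 \<le> 1 / real (\<Prod>b\<in>Basis. fact (\<alpha> b) :: nat)"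
  by (simp add: prod_nonneg)

lemma cmnorm_upper:
  fixes v :: "'a::euclidean_space \<Rightarrow> real"
  assumes "S \<noteq> {}" "\<And>\<alpha>. \<alpha> \<in> mindex m \<Longrightarrow> \<forall>x\<in>S. \<bar>dpart \<alpha> v x\<bar> \<le> Bf \<alpha>"
  shows "cmnorm S m v \<le> (\<Sum>\<alpha>\<in>mindex m. (1 / real (\<Prod>b\<in>Basis. fact (\<alpha> b) :: nat)) * Bf \<alpha>)"
  unfolding cmnorm_def
proof (rule sum_mono)
  fix \<alpha> :: "'a \<Rightarrow> nat" assume a: "\<alpha> \<in> mindex m"
  have "(SUP x\<in>S. \<bar>dpart \<alpha> v x\<bar>) \<le> Bf \<alpha>" using assms(2)[OF a] assms(1) by (intro cSUP_least) auto
  then show "1 / real (\<Prod>b\<in>Basis. fact (\<alpha> b) :: nat) * (SUP x\<in>S. \<bar>dpart \<alpha> v x\<bar>)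
      \<le> 1 / real (\<Prod>b\<in>Basis. fact (\<alpha> b) :: nat) * Bf \<alpha>"
    by (intro mult_left_mono) (simp_all add: prod_nonneg)
qed

lemma UCm_cmnorm_bound:
  assumes "S \<noteq> {}" "UCm S P m F"
  shows "\<exists>C. \<forall>p\<in>P. cmnorm S m (F p) \<le> C"
proof -
  have "\<forall>\<alpha>\<in>mindex m. \<exists>B. \<forall>p\<in>P. \<forall>x\<in>S. \<bar>dpart \<alpha> (F p) x\<bar> \<le> B"
    using UCm_dpart_bound[OF assms(2)] by blast
  from bchoice[OF this] obtain Bf where Bf: "\<forall>\<alpha>\<in>mindex m. \<forall>p\<in>P. \<forall>x\<in>S. \<bar>dpart \<alpha> (F p) x\<bar> \<le> Bf \<alpha>"
    by blast
  have "cmnorm S m (F p) \<le> (\<Sum>\<alpha>\<in>mindex m. (1 / real (\<Prod>b\<in>Basis. fact (\<alpha> b) :: nat)) * Bf \<alpha>)"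
    if "p \<in> P" for p
    using Bf that by (intro cmnorm_upper assms(1)) auto
  then show ?thesis by blast
qed

lemma UCm_term_nonneg:
  assumes "S \<noteq> {}" "UCm S P m F" "p \<in> P" "\<alpha> \<in> mindex m"
  shows "bdd_above ((\<lambda>x. \<bar>dpart \<alpha> (F p) x\<bar>) ` S)" "0 \<le> (SUP x\<in>S. \<bar>dpart \<alpha> (F p) x\<bar>)"
proof -
  obtain B where B: "\<forall>p\<in>P. \<forall>x\<in>S. \<bar>dpart \<alpha> (F p) x\<bar> \<le> B" using UCm_dpart_bound[OF assms(2,4)] by blast
  then show bdd: "bdd_above ((\<lambda>x. \<bar>dpart \<alpha> (F p) x\<bar>) ` S)" using assms(3) by (intro bdd_aboveI2) auto
  obtain x where x: "x \<in> S" using assms(1) by auto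
  have "0 \<le> \<bar>dpart \<alpha> (F p) x\<bar>" by simp
  also have "\<dots> \<le> (SUP x\<in>S. \<bar>dpart \<alpha> (F p) x\<bar>)" using bdd x by (rule cSUP_upper2) simp
  finally show "0 \<le> (SUP x\<in>S. \<bar>dpart \<alpha> (F p) x\<bar>)" .
qed

lemma UCm_cmnorm_mono:
  assumes "S \<noteq> {}" "UCm S P m F" "p \<in> P" "m' \<le> m"
  shows "cmnorm S m' (F p) \<le> cmnorm S m (F p)"
proof -
  have sub: "mindex m' \<subseteq> (mindex m :: ('a \<Rightarrow> nat) set)" using assms(4) unfolding mindex_def by auto
  show ?thesis unfolding cmnorm_def
    by (rule sum_mono2[OF finite_mindex sub])
       (use UCm_term_nonneg(2)[OF assms(1,2,3)] in \<open>auto intro!: divide_nonneg_pos prod_fact_pos\<close>)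
qed

lemma UCm_cmnorm_nonneg:
  assumes "S \<noteq> {}" "UCm S P m F" "p \<in> P"
  shows "0 \<le> cmnorm S m (F p)"
  unfolding cmnorm_def using UCm_term_nonneg(2)[OF assms] by (intro sum_nonneg) (auto intro!: divide_nonneg_pos prod_fact_pos)

lemma UCm_cmnorm_lower:
  fixes S :: "'a::euclidean_space set"
  assumes "S \<noteq> {}" "UCm S P m F" "p \<in> P" "x \<in> S"
  shows "\<bar>F p x\<bar> \<le> cmnorm S m (F p)"
proof -
  define z where "z = ((\<lambda>_. 0) :: 'a \<Rightarrow> nat)"
  have "\<bar>F p x\<bar> \<le> (SUP x\<in>S. \<bar>dpart z (F p) x\<bar>)"
    using UCm_term_nonneg(1)[OF assms(1,2,3) zero_mindex] assms(4) unfolding z_def dpart_zero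
    by (rule cSUP_upper2) simp
  also have "\<dots> = (1 / real (\<Prod>b\<in>Basis. fact (z b) :: nat)) * (SUP x\<in>S. \<bar>dpart z (F p) x\<bar>)"
    by (simp add: z_def)
  also have "\<dots> \<le> cmnorm S m (F p)" unfolding cmnorm_def
    by (rule member_le_sum[OF _ _ finite_mindex]) 
       (use UCm_term_nonneg(2)[OF assms(1,2,3)] zero_mindex z_def in \<open>auto intro!: divide_nonneg_pos prod_fact_pos\<close>)
  finally show ?thesis .
qed

lemma mindex_0: "mindex 0 = {(\<lambda>_. 0) :: 'a::euclidean_space \<Rightarrow> nat}"
proof (intro Set.set_eqI iffI)
  fix \<alpha> :: "'a \<Rightarrow> nat" assume a: "\<alpha> \<in> mindex 0"
  have "\<alpha> b = 0" for b
  proof (cases "b \<in> Basis")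
    case True
    have "(\<Sum>b\<in>Basis. \<alpha> b) = 0" using a unfolding mindex_def by simp
    then show ?thesis using True by (simp add: sum_eq_0_iff)
  next
    case False then show ?thesis using a unfolding mindex_def by simp
  qed
  then show "\<alpha> \<in> {\<lambda>_. 0}" by auto
next
  fix \<alpha> :: "'a \<Rightarrow> nat" assume "\<alpha> \<in> {\<lambda>_. 0}"
  then show "\<alpha> \<in> mindex 0" using zero_mindex by simp
qed

lemma cmnorm_0: "cmnorm S 0 v = (SUP x\<in>S. \<bar>v x\<bar>)"
  unfolding cmnorm_def mindex_0 by (simp add: dpart_zero)

lemma sec_key:
  fixes G g gb :: "'a::euclidean_space \<times> 'a \<Rightarrow> real"
  assumes S: "open S" "bounded S" and p: "p \<in> closure S" and y: "y \<in> S" and b: "b \<in> Basis"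
    and dG: "\<forall>z\<in>S \<times> S. (\<lambda>t. G (z + t *\<^sub>R (0, b))) differentiable (at 0)"
    and g: "continuous_on (closure S \<times> closure S) g" "\<forall>z\<in>S \<times> S. g z = G z"
    and gb: "continuous_on (closure S \<times> closure S) gb" "\<forall>z\<in>S \<times> S. gb z = pder (0, b) G z"
  shows "((\<lambda>t. g (p, y + t *\<^sub>R b)) has_real_derivative gb (p, y)) (at 0)"
proof -
  obtain r where r: "r > 0" "ball y r \<subseteq> S" using S(1) y openE by blast
  define T where "T = ball (0::real) r"
  have nb: "norm b = 1" using b by simp
  have yT: "y + t *\<^sub>R b \<in> S" if "t \<in> T" for t
  proof -
    have "dist y (y + t *\<^sub>R b) = \<bar>t\<bar>" using nb by (simp add: dist_norm)
    then show ?thesis using that r unfolding T_def by auto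
  qed
  obtain q where q: "\<forall>n. q n \<in> S" "q \<longlonglongrightarrow> p" using p closure_sequential by blast
  define K where "K = closure S \<times> closure S"
  have Kc: "compact K" unfolding K_def using S(2) by (simp add: compact_Times compact_closure)
  define f where "f = (\<lambda>n t. G (q n, y + t *\<^sub>R b))"
  define f' where "f' = (\<lambda>n t h. gb (q n, y + t *\<^sub>R b) * h)"
  define g' where "g' = (\<lambda>t h. gb (p, y + t *\<^sub>R b) * h)"
  have derf: "((f n) has_derivative (f' n t)) (at t within T)" if t: "t \<in> T" for n t
  proof -
    define z where "z = (q n, y + t *\<^sub>R b)"
    have z: "z \<in> S \<times> S" unfolding z_def using q(1) yT[OF t] by auto
    have "(\<lambda>s. G (z + s *\<^sub>R (0, b))) differentiable (at 0)" using dG z by blast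
    then have "((\<lambda>s. G (z + s *\<^sub>R (0, b))) has_real_derivative pder (0, b) G z) (at 0)"
      unfolding pder_def using DERIV_deriv_iff_real_differentiable by blast
    moreover have "(\<lambda>s. G (z + s *\<^sub>R (0, b))) = (\<lambda>s. f n (s + t))"
      unfolding z_def f_def by (auto simp: algebra_simps)
    moreover have "gb z = pder (0, b) G z" using gb(2) z by blast
    ultimately have "((\<lambda>s. f n (s + t)) has_real_derivative gb z) (at 0)" by simp
    then have "(f n has_real_derivative gb z) (at (0 + t))" by (simp only: DERIV_shift)
    then have "(f n has_real_derivative gb z) (at t within T)" by (simp add: has_field_derivative_at_within)
    then show ?thesis unfolding has_field_derivative_def f'_def z_def by (simp add: mult.commute)
  qed
  have nle: "\<forall>\<^sub>F n in sequentially. \<forall>t\<in>T. \<forall>h. norm (f' n t h - g' t h) \<le> e * norm h" if e: "e > 0" for e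
  proof -
    have "uniformly_continuous_on K gb" using compact_uniformly_continuous[OF _ Kc] gb(1) unfolding K_def by blast
    then obtain d where d: "d > 0" "\<forall>a\<in>K. \<forall>a'\<in>K. dist a' a < d \<longrightarrow> dist (gb a') (gb a) < e"
      unfolding uniformly_continuous_on_def using e by blast
    have "\<forall>\<^sub>F n in sequentially. dist (q n) p < d" using q(2) d(1) by (rule tendstoD)
    then show ?thesis
    proof (rule eventually_mono)
      fix n assume n: "dist (q n) p < d"
      show "\<forall>t\<in>T. \<forall>h. norm (f' n t h - g' t h) \<le> e * norm h"
      proof (intro ballI allI)
        fix t h assume t: "t \<in> T"
        have a1: "(q n, y + t *\<^sub>R b) \<in> K" unfolding K_def using q(1) yT[OF t] closure_subset by blast
        have a2: "(p, y + t *\<^sub>R b) \<in> K" unfolding K_def using p yT[OF t] closure_subset by blast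
        have "dist (q n, y + t *\<^sub>R b) (p, y + t *\<^sub>R b) < d" using n by (simp add: dist_Pair_Pair)
        then have "dist (gb (q n, y + t *\<^sub>R b)) (gb (p, y + t *\<^sub>R b)) < e" using d(2) a1 a2 by blast
        then have "\<bar>gb (q n, y + t *\<^sub>R b) - gb (p, y + t *\<^sub>R b)\<bar> \<le> e" by (simp add: dist_real_def)
        then have "\<bar>gb (q n, y + t *\<^sub>R b) - gb (p, y + t *\<^sub>R b)\<bar> * \<bar>h\<bar> \<le> e * \<bar>h\<bar>"
          by (intro mult_right_mono) auto
        then show "norm (f' n t h - g' t h) \<le> e * norm h"
          unfolding f'_def g'_def by (simp add: left_diff_distrib[symmetric] abs_mult)
      qed
    qed
  qed
  have lim: "(\<lambda>n. f n t) \<longlonglongrightarrow> g (p, y + t *\<^sub>R b)" if t: "t \<in> T" for t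
  proof -
    have "((\<lambda>n. (q n, y + t *\<^sub>R b)) \<longlongrightarrow> (p, y + t *\<^sub>R b)) sequentially"
      using q(2) by (intro tendsto_intros)
    then have "(\<lambda>n. g (q n, y + t *\<^sub>R b)) \<longlonglongrightarrow> g (p, y + t *\<^sub>R b)"
      using q(1) yT[OF t] p closure_subset
      by (intro continuous_on_tendsto_compose[OF g(1)]) (auto intro!: always_eventually)
    moreover have "g (q n, y + t *\<^sub>R b) = f n t" for n
      unfolding f_def using g(2) q(1) yT[OF t] by auto
    ultimately show ?thesis by simp
  qed
  have T0: "0 \<in> T" "convex T" "open T" unfolding T_def using r by auto
  obtain h where h: "\<forall>t\<in>T. (\<lambda>n. f n t) \<longlonglongrightarrow> h t \<and> (h has_derivative g' t) (at t within T)"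
    using has_derivative_sequence[OF T0(2) derf nle T0(1) lim[OF T0(1)]] by blast
  have heq: "h t = g (p, y + t *\<^sub>R b)" if "t \<in> T" for t
    using h lim that LIMSEQ_unique by blast
  have "(h has_derivative g' 0) (at 0)" using h T0 at_within_open[OF T0(1,3)] by metis
  then have "((\<lambda>t. g (p, y + t *\<^sub>R b)) has_derivative g' 0) (at 0)"
    by (rule has_derivative_transform_within_open[OF _ T0(3) T0(1)]) (use heq in auto)
  then show ?thesis unfolding has_field_derivative_def g'_def by (simp add: mult.commute)
qed

lemma sec2_0:
  fixes g :: "'a::euclidean_space \<times> 'a \<Rightarrow> real"
  assumes "bounded S" "continuous_on (closure S \<times> closure S) g"
  shows "UCm S (closure S) 0 (\<lambda>p y. g (p, y))"
proof -
  have "compact (closure S \<times> closure S)" using assms(1) by (simp add: compact_Times compact_closure)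
  then have "bounded (g ` (closure S \<times> closure S))" using assms(2)
    by (simp add: compact_continuous_image compact_imp_bounded)
  then obtain B where B: "\<forall>v\<in>g ` (closure S \<times> closure S). norm v \<le> B" unfolding bounded_iff by blast
  have "\<forall>p\<in>closure S. \<forall>x\<in>S. \<bar>g (p, x)\<bar> \<le> B"
  proof (intro ballI)
    fix p x assume "p \<in> closure S" "x \<in> S"
    then have "(p, x) \<in> closure S \<times> closure S" using closure_subset by blast
    then show "\<bar>g (p, x)\<bar> \<le> B" using B by auto
  qed
  moreover have "CmExt S 0 (\<lambda>y. g (p, y))" if "p \<in> closure S" for p
  proof -
    have "continuous_on (closure S) (\<lambda>y. g (p, y))"
      by (rule continuous_on_compose2[OF assms(2)]) (use that in \<open>auto intro!: continuous_intros\<close>)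
    then show ?thesis by auto
  qed
  ultimately show ?thesis by auto
qed

lemma Basis_snd: "b \<in> Basis \<Longrightarrow> ((0::'a::euclidean_space), b) \<in> (Basis :: ('a \<times> 'a) set)"
  unfolding Basis_prod_def by auto

lemma sec2:
  fixes G g :: "'a::euclidean_space \<times> 'a \<Rightarrow> real"
  assumes S: "open S" "bounded S"
  shows "CmExt (S \<times> S) m G \<Longrightarrow> continuous_on (closure S \<times> closure S) g \<Longrightarrow> \<forall>z\<in>S \<times> S. g z = G z
     \<Longrightarrow> UCm S (closure S) m (\<lambda>p y. g (p, y))"
proof (induction m arbitrary: G g)
  case 0 then show ?case using sec2_0[OF S(2)] by blast
next
  case (Suc m)
  have dG: "\<forall>z\<in>S \<times> S. \<forall>d\<in>Basis. (\<lambda>t. G (z + t *\<^sub>R d)) differentiable (at 0)"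
    using Suc.prems(1) by simp
  have "UCm S (closure S) m (\<lambda>p. pder b (\<lambda>y. g (p, y)))
      \<and> (\<forall>p\<in>closure S. \<forall>x\<in>S. (\<lambda>t. g (p, x + t *\<^sub>R b)) differentiable (at 0))" if b: "b \<in> Basis" for b
  proof -
    have b2: "(0, b) \<in> (Basis :: ('a \<times> 'a) set)" using b by (rule Basis_snd)
    have "CmExt (S \<times> S) m (pder (0, b) G)" using Suc.prems(1) b2 by simp
    then have c0: "CmExt (S \<times> S) 0 (pder (0, b) G)" by (cases m) auto
    then obtain gb where gb: "continuous_on (closure (S \<times> S)) gb" "\<forall>z\<in>S \<times> S. gb z = pder (0, b) G z" by auto
    have gb1: "continuous_on (closure S \<times> closure S) gb" using gb(1) by (simp add: closure_Times)
    have IH: "UCm S (closure S) m (\<lambda>p y. gb (p, y))"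
      by (rule Suc.IH[OF \<open>CmExt (S \<times> S) m (pder (0, b) G)\<close> gb1 gb(2)])
    have dG': "\<forall>z\<in>S \<times> S. (\<lambda>t. G (z + t *\<^sub>R (0, b))) differentiable (at 0)" using dG b2 by blast
    have D: "((\<lambda>t. g (p, y + t *\<^sub>R b)) has_real_derivative gb (p, y)) (at 0)"
      if "p \<in> closure S" "y \<in> S" for p y
      by (rule sec_key[OF S that b dG' Suc.prems(2,3) gb1 gb(2)])
    have "\<forall>p\<in>closure S. \<forall>y\<in>S. gb (p, y) = pder b (\<lambda>y. g (p, y)) y"
    proof (intro ballI)
      fix p y assume "p \<in> closure S" "y \<in> S"
      from D[OF this] show "gb (p, y) = pder b (\<lambda>y. g (p, y)) y"
        unfolding pder_def by (simp add: DERIV_imp_deriv)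
    qed
    from UCm_cong[OF S(1) IH this] have "UCm S (closure S) m (\<lambda>p. pder b (\<lambda>y. g (p, y)))" .
    moreover have "\<forall>p\<in>closure S. \<forall>x\<in>S. (\<lambda>t. g (p, x + t *\<^sub>R b)) differentiable (at 0)"
      using D real_differentiable_def by blast
    ultimately show ?thesis by blast
  qed
  moreover have "UCm S (closure S) 0 (\<lambda>p y. g (p, y))" using sec2_0[OF S(2) Suc.prems(2)] .
  ultimately show ?case by simp
qed

lemma CmExt_swap0:
  fixes G :: "'a::euclidean_space \<times> 'a \<Rightarrow> real"
  assumes "CmExt (S \<times> S) 0 G"
  shows "CmExt (S \<times> S) 0 (\<lambda>z. G (prod.swap z))"
proof -
  obtain g where g: "continuous_on (closure (S \<times> S)) g" "\<forall>z\<in>S \<times> S. g z = G z" using assms by auto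
  have "continuous_on (closure (S \<times> S)) (\<lambda>z. g (prod.swap z))"
    by (rule continuous_on_compose2[OF g(1)]) (auto intro!: continuous_intros simp: closure_Times)
  moreover have "\<forall>z\<in>S \<times> S. g (prod.swap z) = G (prod.swap z)" using g(2) by auto
  ultimately show ?thesis by auto
qed

lemma CmExt_swap:
  fixes G :: "'a::euclidean_space \<times> 'a \<Rightarrow> real"
  shows "CmExt (S \<times> S) m G \<Longrightarrow> CmExt (S \<times> S) m (\<lambda>z. G (prod.swap z))"
proof (induction m arbitrary: G)
  case 0 then show ?case by (rule CmExt_swap0)
next
  case (Suc m)
  have sw: "prod.swap d \<in> (Basis :: ('a \<times> 'a) set)" if "d \<in> Basis" for d :: "'a \<times> 'a"
    using that unfolding Basis_prod_def by auto
  have pd: "pder d (\<lambda>z. G (prod.swap z)) = (\<lambda>z. pder (prod.swap d) G (prod.swap z))" for d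
    unfolding pder_def by (auto simp: fun_eq_iff prod.swap_def algebra_simps)
  have "CmExt (S \<times> S) m (pder d (\<lambda>z. G (prod.swap z)))" if "d \<in> Basis" for d
    unfolding pd using Suc.IH[of "pder (prod.swap d) G"] Suc.prems sw[OF that] by simp
  moreover have "(\<lambda>t. G (prod.swap (z + t *\<^sub>R d))) differentiable (at 0)"
    if "d \<in> Basis" "z \<in> S \<times> S" for d z
  proof -
    have "(\<lambda>t. G (prod.swap z + t *\<^sub>R prod.swap d)) differentiable (at 0)"
      using Suc.prems sw[OF that(1)] that(2) by auto
    then show ?thesis by (simp add: prod.swap_def)
  qed
  moreover have "CmExt (S \<times> S) 0 (\<lambda>z. G (prod.swap z))"
    using Suc.prems by (intro CmExt_swap0) simp
  ultimately show ?case by simp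
qed

lemma cont_integrable:
  fixes g :: "'a::euclidean_space \<Rightarrow> real"
  assumes "open S" "bounded S" "continuous_on (closure S) g"
  shows "g integrable_on S"
proof -
  have "compact (closure S)" using assms(2) by (simp add: compact_closure)
  then have "bounded (g ` closure S)" using assms(3) by (simp add: compact_continuous_image compact_imp_bounded)
  then obtain B where B: "\<forall>y\<in>g ` closure S. norm y \<le> B" unfolding bounded_iff by blast
  have lm: "S \<in> lmeasurable" using lmeasurable_open[OF assms(2,1)] .
  have "continuous_on S g" using assms(3) closure_subset continuous_on_subset by blast
  then have m: "g \<in> borel_measurable (lebesgue_on S)"
    using lm by (intro continuous_imp_measurable_on_sets_lebesgue) (auto simp: fmeasurable_def)
  have "(\<lambda>_. B) integrable_on S" using lm by (rule integrable_on_const)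
  moreover have "\<And>x. x \<in> S \<Longrightarrow> norm (g x) \<le> B" using B closure_subset by fastforce
  ultimately show ?thesis using m lm
    by (intro measurable_bounded_by_integrable_imp_integrable[of g S "\<lambda>_. B"]) (auto simp: fmeasurable_def)
qed

lemma sum_swap_mult:
  "(\<Sum>j\<in>J. r j * (\<Sum>l\<in>L. a l * K j l)) = (\<Sum>l\<in>L. a l * (\<Sum>j\<in>J. r j * K j l))" for r a :: "'b \<Rightarrow> real"
proof -
  have "(\<Sum>j\<in>J. r j * (\<Sum>l\<in>L. a l * K j l)) = (\<Sum>j\<in>J. \<Sum>l\<in>L. a l * (r j * K j l))"
    by (simp add: sum_distrib_left mult.left_commute)
  also have "\<dots> = (\<Sum>l\<in>L. \<Sum>j\<in>J. a l * (r j * K j l))" by (rule sum.swap)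
  also have "\<dots> = (\<Sum>l\<in>L. a l * (\<Sum>j\<in>J. r j * K j l))" by (simp add: sum_distrib_left)
  finally show ?thesis .
qed

lemma abs_sum_mult_le:
  fixes a E :: "nat \<Rightarrow> real"
  assumes "\<forall>l<N. \<bar>E l\<bar> \<le> Eb"
  shows "\<bar>\<Sum>l<N. a l * E l\<bar> \<le> (\<Sum>l<N. \<bar>a l\<bar>) * Eb"
proof -
  have "\<bar>\<Sum>l<N. a l * E l\<bar> \<le> (\<Sum>l<N. \<bar>a l * E l\<bar>)" by (rule sum_abs)
  also have "\<dots> \<le> (\<Sum>l<N. \<bar>a l\<bar> * Eb)"
    using assms by (intro sum_mono) (auto simp: abs_mult intro: mult_left_mono)
  also have "\<dots> = (\<Sum>l<N. \<bar>a l\<bar>) * Eb" by (simp add: sum_distrib_right)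
  finally show ?thesis .
qed

lemma closure_ext_le:
  fixes h :: "'a::metric_space \<Rightarrow> real"
  assumes "continuous_on (closure A) h" "\<forall>x\<in>A. h x \<le> c"
  shows "\<forall>x\<in>closure A. h x \<le> c"
proof
  fix x assume x: "x \<in> closure A"
  obtain s where s: "\<forall>n. s n \<in> A" "s \<longlonglongrightarrow> x" using x closure_sequential by blast
  have "(\<lambda>n. h (s n)) \<longlonglongrightarrow> h x"
    using s x closure_subset by (intro continuous_on_tendsto_compose[OF assms(1)]) (auto intro!: always_eventually)
  then show "h x \<le> c" using s(1) assms(2) by (intro LIMSEQ_le_const2) auto
qed

locale disc =
  fixes S :: "'a::euclidean_space set" and k :: "'a \<times> 'a \<Rightarrow> real" and lam :: real
    and xs ys :: "nat \<Rightarrow> 'a" and n N :: nat and ws :: "nat \<Rightarrow> real" and Rm :: "nat \<Rightarrow> nat \<Rightarrow> real"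
    and K0 CQ CI Mr Eps :: real
  assumes opn: "open S" and bnd: "bounded S" and ne: "S \<noteq> {}"
    and kcont: "continuous_on (closure S \<times> closure S) k"
    and kbd: "\<forall>a\<in>closure S. \<forall>b\<in>closure S. \<bar>k (a, b)\<bar> \<le> K0"
    and xsS: "\<forall>j<n. xs j \<in> closure S" and ysS: "\<forall>i<N. ys i \<in> closure S"
    and wsb: "(\<Sum>i<N. \<bar>ws i\<bar>) \<le> CQ" and Rb: "\<forall>i<N. (\<Sum>j<n. \<bar>Rm i j\<bar>) \<le> CI"
    and CI0: "0 \<le> CI" and lam0: "lam \<noteq> 0" and Mr0: "0 \<le> Mr"
    and res: "\<And>v b. continuous_on (closure S) v \<Longrightarrow> (\<forall>x\<in>closure S. \<bar>intop S k lam v x\<bar> \<le> b)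
                \<Longrightarrow> (\<forall>x\<in>closure S. \<bar>v x\<bar> \<le> Mr * b)"
    and Eb: "\<forall>x\<in>closure S. \<forall>l<N. \<bar>(\<Sum>i<N. ws i * k (x, ys i) * (\<Sum>j<n. Rm i j * k (xs j, ys l)))
                 - integral S (\<lambda>y. k (x, y) * k (y, ys l))\<bar> \<le> Eps"
    and small: "Mr * (CQ * CI * Eps) \<le> \<bar>lam\<bar> / 2" and Eps0: "0 \<le> Eps"
begin

definition Kh :: "(nat \<Rightarrow> real) \<Rightarrow> 'a \<Rightarrow> real" where
  "Kh c x = (\<Sum>i<N. ws i * k (x, ys i) * (\<Sum>j<n. Rm i j * c j))"

lemma K0_nonneg: "0 \<le> K0"
proof -
  obtain a where "a \<in> S" using ne by auto
  then have "a \<in> closure S" using closure_subset by auto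
  then show ?thesis using kbd by force
qed

lemma CQ_nonneg: "0 \<le> CQ"
  using wsb by (meson order_trans sum_nonneg abs_ge_zero)

lemma Kh_add: "Kh (\<lambda>j. c j + d j) x = Kh c x + Kh d x"
  unfolding Kh_def by (simp add: distrib_left sum.distrib)

lemma Kh_diff: "Kh (\<lambda>j. c j - d j) x = Kh c x - Kh d x"
  unfolding Kh_def by (simp add: right_diff_distrib sum_subtractf)

lemma Kh_scale: "Kh (\<lambda>j. a * c j) x = a * Kh c x"
  unfolding Kh_def by (simp add: sum_distrib_left mult.left_commute)

lemma wsum_bound:
  assumes "\<forall>i<N. \<bar>g i\<bar> \<le> G" "0 \<le> G"
  shows "\<bar>\<Sum>i<N. ws i * g i\<bar> \<le> CQ * G"
proof -
  have "\<bar>\<Sum>i<N. ws i * g i\<bar> \<le> (\<Sum>i<N. \<bar>ws i\<bar>) * G" using abs_sum_mult_le[OF assms(1)] .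
  also have "\<dots> \<le> CQ * G" using wsb assms(2) by (intro mult_right_mono) auto
  finally show ?thesis .
qed

lemma Rsum_bound:
  assumes "0 \<le> D" "\<forall>j<n. \<bar>c j\<bar> \<le> D" "i < N"
  shows "\<bar>\<Sum>j<n. Rm i j * c j\<bar> \<le> CI * D"
proof -
  have "\<bar>\<Sum>j<n. Rm i j * c j\<bar> \<le> (\<Sum>j<n. \<bar>Rm i j\<bar>) * D"
    using abs_sum_mult_le[of n c D "Rm i"] assms(2) by blast
  also have "\<dots> \<le> CI * D" using Rb assms(1,3) by (intro mult_right_mono) auto
  finally show ?thesis .
qed

lemma Kh_bound:
  assumes "0 \<le> D" "\<forall>j<n. \<bar>c j\<bar> \<le> D" "x \<in> closure S"
  shows "\<bar>Kh c x\<bar> \<le> CQ * (K0 * (CI * D))"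
proof -
  have "\<forall>i<N. \<bar>k (x, ys i) * (\<Sum>j<n. Rm i j * c j)\<bar> \<le> K0 * (CI * D)"
  proof (intro allI impI)
    fix i assume i: "i < N"
    have "\<bar>k (x, ys i)\<bar> \<le> K0" using kbd assms(3) ysS i by blast
    moreover have "\<bar>\<Sum>j<n. Rm i j * c j\<bar> \<le> CI * D" by (rule Rsum_bound[OF assms(1,2) i])
    ultimately show "\<bar>k (x, ys i) * (\<Sum>j<n. Rm i j * c j)\<bar> \<le> K0 * (CI * D)"
      unfolding abs_mult using K0_nonneg by (intro mult_mono) auto
  qed
  moreover have "0 \<le> K0 * (CI * D)" using K0_nonneg CI0 assms(1) by simp
  ultimately have "\<bar>\<Sum>i<N. ws i * (k (x, ys i) * (\<Sum>j<n. Rm i j * c j))\<bar> \<le> CQ * (K0 * (CI * D))"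
    by (rule wsum_bound)
  then show ?thesis unfolding Kh_def by (simp add: mult.assoc)
qed

lemma Kh_cont: "continuous_on (closure S) (Kh c)"
proof -
  have "continuous_on (closure S) (\<lambda>x. k (x, ys i))" if "i < N" for i
    by (rule continuous_on_compose2[OF kcont]) (use ysS that in \<open>auto intro!: continuous_intros\<close>)
  then show ?thesis unfolding Kh_def[abs_def] by (intro continuous_intros) auto
qed

lemma sys_eq:
  assumes "j < n"
  shows "(\<Sum>l<n. sysmat lam k xs ys N ws Rm j l * c l) = lam * c j - Kh c (xs j)"
proof -
  have "(\<Sum>l<n. sysmat lam k xs ys N ws Rm j l * c l)
      = (\<Sum>l<n. (if j = l then lam else 0) * c l) - (\<Sum>l<n. (\<Sum>i<N. k (xs j, ys i) * ws i * Rm i l) * c l)"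
    unfolding sysmat_def by (simp add: left_diff_distrib sum_subtractf)
  also have "(\<Sum>l<n. (if j = l then lam else 0) * c l) = (\<Sum>l<n. if j = l then lam * c l else 0)"
    by (intro sum.cong) auto
  also have "\<dots> = lam * c j" using assms by simp
  also have "(\<Sum>l<n. (\<Sum>i<N. k (xs j, ys i) * ws i * Rm i l) * c l)
      = (\<Sum>l<n. \<Sum>i<N. ws i * k (xs j, ys i) * (Rm i l * c l))"
    by (intro sum.cong refl) (simp add: sum_distrib_right sum_distrib_left mult_ac)
  also have "\<dots> = (\<Sum>i<N. \<Sum>l<n. ws i * k (xs j, ys i) * (Rm i l * c l))" by (rule sum.swap)
  also have "\<dots> = Kh c (xs j)" unfolding Kh_def by (simp add: sum_distrib_left)
  finally show ?thesis .
qed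

lemma E_lemma:
  assumes D: "0 \<le> D" "\<forall>j<n. \<bar>d j\<bar> \<le> D" and x: "x \<in> closure S"
  shows "\<bar>Kh (\<lambda>j. Kh d (xs j)) x - integral S (\<lambda>y. k (x, y) * Kh d y)\<bar> \<le> CQ * CI * Eps * D"
proof -
  define a where "a l = ws l * (\<Sum>j<n. Rm l j * d j)" for l
  have Khd: "Kh d y = (\<Sum>l<N. a l * k (y, ys l))" for y unfolding Kh_def a_def by (simp add: mult_ac)
  have ie: "(\<lambda>y. a l * (k (x, y) * k (y, ys l))) integrable_on S" if l: "l < N" for l
  proof -
    have c1: "continuous_on (closure S) (\<lambda>y. k (x, y))"
      by (rule continuous_on_compose2[OF kcont]) (use x in \<open>auto intro!: continuous_intros\<close>)
    have c2: "continuous_on (closure S) (\<lambda>y. k (y, ys l))"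
      by (rule continuous_on_compose2[OF kcont]) (use ysS l in \<open>auto intro!: continuous_intros\<close>)
    have "continuous_on (closure S) (\<lambda>y. a l * (k (x, y) * k (y, ys l)))"
      using c1 c2 by (intro continuous_intros)
    then show ?thesis by (rule cont_integrable[OF opn bnd])
  qed
  have "integral S (\<lambda>y. k (x, y) * Kh d y) = integral S (\<lambda>y. \<Sum>l<N. a l * (k (x, y) * k (y, ys l)))"
    unfolding Khd by (simp add: sum_distrib_left mult_ac)
  also have "\<dots> = (\<Sum>l<N. integral S (\<lambda>y. a l * (k (x, y) * k (y, ys l))))"
    by (rule integral_sum) (use ie in auto)
  also have "\<dots> = (\<Sum>l<N. a l * integral S (\<lambda>y. k (x, y) * k (y, ys l)))" by simp
  finally have I: "integral S (\<lambda>y. k (x, y) * Kh d y) = (\<Sum>l<N. a l * integral S (\<lambda>y. k (x, y) * k (y, ys l)))" .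
  have "Kh (\<lambda>j. Kh d (xs j)) x = (\<Sum>i<N. (ws i * k (x, ys i)) * (\<Sum>j<n. Rm i j * (\<Sum>l<N. a l * k (xs j, ys l))))"
    unfolding Khd unfolding Kh_def by (simp add: mult.assoc)
  also have "\<dots> = (\<Sum>i<N. (ws i * k (x, ys i)) * (\<Sum>l<N. a l * (\<Sum>j<n. Rm i j * k (xs j, ys l))))"
  proof -
    have "\<And>i. (\<Sum>j<n. Rm i j * (\<Sum>l<N. a l * k (xs j, ys l))) = (\<Sum>l<N. a l * (\<Sum>j<n. Rm i j * k (xs j, ys l)))"
      by (rule sum_swap_mult)
    then show ?thesis by (simp only:)
  qed
  also have "\<dots> = (\<Sum>l<N. a l * (\<Sum>i<N. (ws i * k (x, ys i)) * (\<Sum>j<n. Rm i j * k (xs j, ys l))))"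
    by (rule sum_swap_mult)
  finally have J: "Kh (\<lambda>j. Kh d (xs j)) x = (\<Sum>l<N. a l * (\<Sum>i<N. ws i * k (x, ys i) * (\<Sum>j<n. Rm i j * k (xs j, ys l))))" .
  define E where "E l = (\<Sum>i<N. ws i * k (x, ys i) * (\<Sum>j<n. Rm i j * k (xs j, ys l))) - integral S (\<lambda>y. k (x, y) * k (y, ys l))" for l
  have eqE: "Kh (\<lambda>j. Kh d (xs j)) x - integral S (\<lambda>y. k (x, y) * Kh d y) = (\<Sum>l<N. a l * E l)"
    unfolding I J E_def by (simp add: right_diff_distrib sum_subtractf)
  have "\<forall>l<N. \<bar>E l\<bar> \<le> Eps" unfolding E_def using Eb x by blast
  then have "\<bar>\<Sum>l<N. a l * E l\<bar> \<le> (\<Sum>l<N. \<bar>a l\<bar>) * Eps" by (rule abs_sum_mult_le)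
  then have "\<bar>Kh (\<lambda>j. Kh d (xs j)) x - integral S (\<lambda>y. k (x, y) * Kh d y)\<bar> \<le> (\<Sum>l<N. \<bar>a l\<bar>) * Eps"
    unfolding eqE .
  also have "\<dots> \<le> (CQ * CI * D) * Eps"
  proof (rule mult_right_mono[OF _ Eps0])
    have "(\<Sum>l<N. \<bar>a l\<bar>) \<le> (\<Sum>l<N. \<bar>ws l\<bar> * (CI * D))"
    proof (rule sum_mono)
      fix l assume "l \<in> {..<N}"
      then have "\<bar>\<Sum>j<n. Rm l j * d j\<bar> \<le> CI * D" using Rsum_bound[OF D] by auto
      then show "\<bar>a l\<bar> \<le> \<bar>ws l\<bar> * (CI * D)" unfolding a_def abs_mult by (intro mult_left_mono) auto
    qed
    also have "\<dots> = (\<Sum>l<N. \<bar>ws l\<bar>) * (CI * D)" by (simp add: sum_distrib_right)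
    also have "\<dots> \<le> CQ * (CI * D)" using wsb CI0 D(1) by (intro mult_right_mono) auto
    finally show "(\<Sum>l<N. \<bar>a l\<bar>) \<le> CQ * CI * D" by (simp add: mult.assoc)
  qed
  finally show ?thesis by (simp add: mult_ac)
qed

lemma stab:
  assumes T: "0 \<le> T" "\<forall>j<n. \<bar>lam * c j - Kh c (xs j)\<bar> \<le> T"
  shows "\<forall>j<n. \<bar>c j\<bar> \<le> (2 * (1 + Mr * (CQ * (K0 * CI))) / \<bar>lam\<bar>) * T"
proof -
  define Cm where "Cm = Max (insert 0 ((\<lambda>j. \<bar>c j\<bar>) ` {..<n}))"
  have finC: "finite (insert 0 ((\<lambda>j. \<bar>c j\<bar>) ` {..<n}))" by simp
  have Cm0: "0 \<le> Cm" unfolding Cm_def using finC by (intro Max_ge) auto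
  have Cmb: "\<forall>j<n. \<bar>c j\<bar> \<le> Cm" unfolding Cm_def using finC by (auto intro!: Max_ge)
  have Cmc: "Cm = 0 \<or> (\<exists>j<n. Cm = \<bar>c j\<bar>)"
    using Max_in[OF finC] unfolding Cm_def by auto
  define \<tau> where "\<tau> j = lam * c j - Kh c (xs j)" for j
  have \<tau>b: "\<forall>j<n. \<bar>\<tau> j\<bar> \<le> T" using T(2) unfolding \<tau>_def by blast
  have ideq: "(\<lambda>j. lam * c j) = (\<lambda>j. \<tau> j + Kh c (xs j))" unfolding \<tau>_def by auto
  have id: "lam * Kh c x = Kh \<tau> x + Kh (\<lambda>j. Kh c (xs j)) x" for x
    using Kh_scale[of lam c x] Kh_add[of \<tau> "\<lambda>j. Kh c (xs j)" x] ideq by simp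
  have "\<forall>x\<in>closure S. \<bar>intop S k lam (Kh c) x\<bar> \<le> CQ * (K0 * (CI * T)) + CQ * CI * Eps * Cm"
  proof
    fix x assume x: "x \<in> closure S"
    have "intop S k lam (Kh c) x = Kh \<tau> x + (Kh (\<lambda>j. Kh c (xs j)) x - integral S (\<lambda>y. k (x, y) * Kh c y))"
      unfolding intop_def using id[of x] by simp
    moreover have "\<bar>Kh \<tau> x\<bar> \<le> CQ * (K0 * (CI * T))" by (rule Kh_bound[OF T(1) \<tau>b x])
    moreover have "\<bar>Kh (\<lambda>j. Kh c (xs j)) x - integral S (\<lambda>y. k (x, y) * Kh c y)\<bar> \<le> CQ * CI * Eps * Cm"
      by (rule E_lemma[OF Cm0 Cmb x])
    ultimately show "\<bar>intop S k lam (Kh c) x\<bar> \<le> CQ * (K0 * (CI * T)) + CQ * CI * Eps * Cm" by linarith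
  qed
  from res[OF Kh_cont this]
  have phb: "\<forall>x\<in>closure S. \<bar>Kh c x\<bar> \<le> Mr * (CQ * (K0 * (CI * T)) + CQ * CI * Eps * Cm)" .
  define P where "P = Mr * (CQ * (K0 * CI))"
  define Q where "Q = Mr * (CQ * CI * Eps)"
  have P0: "0 \<le> P" unfolding P_def using Mr0 CQ_nonneg K0_nonneg CI0 by simp
  have Qs: "Q \<le> \<bar>lam\<bar> / 2" unfolding Q_def using small .
  have L: "0 < \<bar>lam\<bar>" using lam0 by simp
  have cj: "\<bar>lam\<bar> * \<bar>c j\<bar> \<le> (1 + P) * T + Q * Cm" if j: "j < n" for j
  proof -
    have "\<bar>lam\<bar> * \<bar>c j\<bar> = \<bar>\<tau> j + Kh c (xs j)\<bar>" using fun_cong[OF ideq, of j] by (simp add: abs_mult[symmetric])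
    also have "\<dots> \<le> \<bar>\<tau> j\<bar> + \<bar>Kh c (xs j)\<bar>" by (rule abs_triangle_ineq)
    also have "\<dots> \<le> T + Mr * (CQ * (K0 * (CI * T)) + CQ * CI * Eps * Cm)"
      using \<tau>b phb xsS j by (intro add_mono) auto
    also have "\<dots> = (1 + P) * T + Q * Cm" unfolding P_def Q_def by (simp add: algebra_simps)
    finally show ?thesis .
  qed
  have "Cm \<le> (2 * (1 + P) / \<bar>lam\<bar>) * T"
  proof (cases "Cm = 0")
    case True then show ?thesis using P0 T(1) L by simp
  next
    case False
    then obtain j where j: "j < n" "Cm = \<bar>c j\<bar>" using Cmc by auto
    have "\<bar>lam\<bar> * Cm \<le> (1 + P) * T + Q * Cm" using cj[OF j(1)] j(2) by simp
    also have "\<dots> \<le> (1 + P) * T + (\<bar>lam\<bar> / 2) * Cm" using Qs Cm0 by (intro add_left_mono mult_right_mono)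
    finally have "\<bar>lam\<bar> * Cm \<le> 2 * ((1 + P) * T)" by simp
    then show ?thesis using L by (simp add: field_simps)
  qed
  then show ?thesis using Cmb unfolding P_def by fastforce
qed

abbreviation "A \<equiv> sysmat lam k xs ys N ws Rm"
abbreviation "M1 \<equiv> 2 * (1 + Mr * (CQ * (K0 * CI))) / \<bar>lam\<bar>"

lemma M1_nonneg: "0 \<le> M1"
  using Mr0 CQ_nonneg K0_nonneg CI0 by simp

lemma A_stab:
  assumes "0 \<le> T" "\<forall>i<n. \<bar>\<Sum>j<n. A i j * c j\<bar> \<le> T"
  shows "\<forall>j<n. \<bar>c j\<bar> \<le> M1 * T"
  using stab[OF assms(1)] assms(2) sys_eq by simp

lemma A_inv: "\<exists>B. is_inverse n A B"
proof (rule inverse_exists)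
  fix c assume "\<forall>i<n. (\<Sum>j<n. A i j * c j) = 0"
  then have "\<forall>j<n. \<bar>c j\<bar> \<le> M1 * 0" by (intro A_stab) auto
  then show "\<forall>j<n. c j = 0" by simp
qed

lemma A_invnorm: "is_inverse n A B \<Longrightarrow> mat_inf_norm n n B \<le> M1"
  by (rule is_inverse_norm_bound[OF M1_nonneg]) (use A_stab in auto)

lemma mat_inf_norm_nonneg: "0 \<le> mat_inf_norm m m' B"
  unfolding mat_inf_norm_def by (rule Max_ge) auto

lemma A_norm: "mat_inf_norm n n A \<le> \<bar>lam\<bar> + CQ * (K0 * CI)"
proof -
  have row: "(\<Sum>l<n. \<bar>A j l\<bar>) \<le> \<bar>lam\<bar> + CQ * (K0 * CI)" if j: "j < n" for j
  proof -
    have "(\<Sum>l<n. \<bar>A j l\<bar>) \<le> (\<Sum>l<n. \<bar>if j = l then lam else 0\<bar> + (\<Sum>i<N. \<bar>ws i\<bar> * (K0 * \<bar>Rm i l\<bar>)))"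
    proof (rule sum_mono)
      fix l assume "l \<in> {..<n}"
      have "\<bar>\<Sum>i<N. k (xs j, ys i) * ws i * Rm i l\<bar> \<le> (\<Sum>i<N. \<bar>k (xs j, ys i) * ws i * Rm i l\<bar>)" by (rule sum_abs)
      also have "\<dots> \<le> (\<Sum>i<N. \<bar>ws i\<bar> * (K0 * \<bar>Rm i l\<bar>))"
      proof (rule sum_mono)
        fix i assume "i \<in> {..<N}"
        then have "\<bar>k (xs j, ys i)\<bar> \<le> K0" using kbd xsS ysS j by auto
        then show "\<bar>k (xs j, ys i) * ws i * Rm i l\<bar> \<le> \<bar>ws i\<bar> * (K0 * \<bar>Rm i l\<bar>)"
        proof -
          have "\<bar>k (xs j, ys i)\<bar> * (\<bar>ws i\<bar> * \<bar>Rm i l\<bar>) \<le> K0 * (\<bar>ws i\<bar> * \<bar>Rm i l\<bar>)"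
            using \<open>\<bar>k (xs j, ys i)\<bar> \<le> K0\<close> by (intro mult_right_mono) auto
          then show ?thesis unfolding abs_mult by (simp add: mult_ac)
        qed
      qed
      finally show "\<bar>A j l\<bar> \<le> \<bar>if j = l then lam else 0\<bar> + (\<Sum>i<N. \<bar>ws i\<bar> * (K0 * \<bar>Rm i l\<bar>))"
        unfolding sysmat_def by (smt (verit))
    qed
    also have "\<dots> = (\<Sum>l<n. \<bar>if j = l then lam else 0\<bar>) + (\<Sum>i<N. \<bar>ws i\<bar> * (K0 * (\<Sum>l<n. \<bar>Rm i l\<bar>)))"
      by (simp add: sum.distrib sum_distrib_left sum.swap[of _ "{..<n}"])
    also have "(\<Sum>l<n. \<bar>if j = l then lam else 0\<bar>) = \<bar>lam\<bar>"
    proof -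
      have "(\<Sum>l<n. \<bar>if j = l then lam else 0\<bar>) = (\<Sum>l<n. if j = l then \<bar>lam\<bar> else 0)" by (intro sum.cong) auto
      then show ?thesis using j by simp
    qed
    also have "(\<Sum>i<N. \<bar>ws i\<bar> * (K0 * (\<Sum>l<n. \<bar>Rm i l\<bar>))) \<le> (\<Sum>i<N. \<bar>ws i\<bar> * (K0 * CI))"
      using Rb K0_nonneg by (intro sum_mono mult_left_mono) auto
    also have "\<dots> = (\<Sum>i<N. \<bar>ws i\<bar>) * (K0 * CI)" by (simp add: sum_distrib_right)
    also have "\<dots> \<le> CQ * (K0 * CI)" using wsb K0_nonneg CI0 by (intro mult_right_mono) auto
    finally show ?thesis by simp
  qed
  have "0 \<le> \<bar>lam\<bar> + CQ * (K0 * CI)" using CQ_nonneg K0_nonneg CI0 by simp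
  then show ?thesis unfolding mat_inf_norm_def using row by (subst Max_le_iff) auto
qed

lemma A_cond: "cond_inf n A \<le> (\<bar>lam\<bar> + CQ * (K0 * CI)) * M1"
proof -
  have "is_inverse n A (SOME B. is_inverse n A B)" using A_inv by (rule someI_ex)
  then have "mat_inf_norm n n (SOME B. is_inverse n A B) \<le> M1" by (rule A_invnorm)
  then show ?thesis unfolding cond_inf_def
    using A_norm mat_inf_norm_nonneg CQ_nonneg K0_nonneg CI0 by (intro mult_mono) auto
qed

end

lemma wsum_bound_gen:
  fixes ws g :: "nat \<Rightarrow> real"
  assumes "(\<Sum>i<N. \<bar>ws i\<bar>) \<le> CQ" "\<forall>i<N. \<bar>g i\<bar> \<le> G" "0 \<le> G"
  shows "\<bar>\<Sum>i<N. ws i * g i\<bar> \<le> CQ * G"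
proof -
  have "\<bar>\<Sum>i<N. ws i * g i\<bar> \<le> (\<Sum>i<N. \<bar>ws i\<bar>) * G" using abs_sum_mult_le[OF assms(2)] .
  also have "\<dots> \<le> CQ * G" using assms(1,3) by (intro mult_right_mono) auto
  finally show ?thesis .
qed

theorem theorem3p10:
  fixes \<Omega> :: "'a::euclidean_space set"
    and q qw qR :: nat and lam :: real
    and k :: "'a \<times> 'a \<Rightarrow> real" and f u :: "'a \<Rightarrow> real"
    and Y :: "real \<Rightarrow> nat \<Rightarrow> 'a" and nY :: "real \<Rightarrow> nat" and w :: "real \<Rightarrow> nat \<Rightarrow> real"
    and X :: "real \<Rightarrow> nat \<Rightarrow> 'a" and nX :: "real \<Rightarrow> nat"
    and R :: "real \<Rightarrow> real \<Rightarrow> nat \<Rightarrow> nat \<Rightarrow> real"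
    and CQ Cw CR :: real
  assumes "bounded \<Omega>" and "open \<Omega>"
    and "q \<ge> 1" and "lam \<noteq> 0"
    and "Cm (\<Omega> \<times> \<Omega>) q k"
    and "Cm \<Omega> q f" and "\<exists>x\<in>closure \<Omega>. f x \<noteq> 0"
    and "notin_spectrum \<Omega> k lam"
    and "Cm \<Omega> q u"
    and "\<forall>x\<in>\<Omega>. lam * u x - integral \<Omega> (\<lambda>y. k (x, y) * u y) = f x"
    \<comment> \<open>quadrature scheme\<close>
    and "\<forall>hY>0. \<forall>i<nY hY. Y hY i \<in> closure \<Omega>"
    and "\<forall>hY>0. inj_on (Y hY) {..<nY hY}"
    and "filterlim nY at_top (at_right 0)"
    and "\<forall>hY>0. (\<Sum>i<nY hY. \<bar>w hY i\<bar>) \<le> CQ"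
    and "0 < qw" and "qw \<le> q"
    and "\<forall>hY>0. \<forall>v. Cm \<Omega> qw v \<longrightarrow>
           \<bar>integral \<Omega> v - (\<Sum>i<nY hY. w hY i * v (Y hY i))\<bar> \<le> Cw * hY ^ qw * cmnorm \<Omega> qw v"
    \<comment> \<open>reconstruction scheme\<close>
    and "\<forall>hX>0. \<forall>j<nX hX. X hX j \<in> closure \<Omega>"
    and "\<forall>hX>0. inj_on (X hX) {..<nX hX}"
    and "\<exists>CI. \<forall>hX>0. \<forall>hY>0. \<forall>i<nY hY. (\<Sum>j<nX hX. \<bar>R hX hY i j\<bar>) \<le> CI"
    and "0 < qR" and "qR \<le> q"
    and "\<forall>hX>0. \<forall>hY>0. \<forall>v. Cm \<Omega> qR v \<longrightarrow> (\<forall>i<nY hY.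
           \<bar>v (Y hY i) - (\<Sum>j<nX hX. R hX hY i j * v (X hX j))\<bar> \<le> CR * hX ^ qR * cmnorm \<Omega> qR v)"
  shows "\<exists>\<delta>>0. \<exists>C>0. \<exists>M. \<forall>hX hY. 0 < hX \<and> hX < \<delta> \<and> 0 < hY \<and> hY < \<delta> \<longrightarrow>
     (let A = sysmat lam k (X hX) (Y hY) (nY hY) (w hY) (R hX hY) in
       (\<exists>uh. \<forall>i<nX hX. (\<Sum>j<nX hX. A i j * uh j) = f (X hX i))
     \<and> (\<forall>uh uh'. (\<forall>i<nX hX. (\<Sum>j<nX hX. A i j * uh j) = f (X hX i))
                \<and> (\<forall>i<nX hX. (\<Sum>j<nX hX. A i j * uh' j) = f (X hX i))
                \<longrightarrow> (\<forall>j<nX hX. uh j = uh' j))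
     \<and> cond_inf (nX hX) A \<le> M
     \<and> (\<forall>uh. (\<forall>i<nX hX. (\<Sum>j<nX hX. A i j * uh j) = f (X hX i)) \<longrightarrow>
          (\<forall>x\<in>closure \<Omega>.
             \<bar>u x - nystrom lam k f (Y hY) (nY hY) (nX hX) (w hY) (R hX hY) uh x\<bar>
             \<le> C * (Cw * (SUP x'\<in>closure \<Omega>. cmnorm \<Omega> q (\<lambda>y. k (x', y))) * hY ^ qw
                     + CQ * CR * cmnorm (\<Omega> \<times> \<Omega>) 0 k * hX ^ qR) * cmnorm \<Omega> q u)))"

proof -
  note A = assms
  have opn: "open \<Omega>" and bnd: "bounded \<Omega>" using A(1,2) by auto
  have ne: "\<Omega> \<noteq> {}" using A(7) by auto
  have kCm: "continuous_on (closure \<Omega> \<times> closure \<Omega>) k" "CmExt (\<Omega> \<times> \<Omega>) q k"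
    using A(5) unfolding Cm_def by (auto simp: closure_Times)
  have uCm: "continuous_on (closure \<Omega>) u" "CmExt \<Omega> q u" using A(9) unfolding Cm_def by auto
  have fCm: "continuous_on (closure \<Omega>) f" using A(6) unfolding Cm_def by auto
  define K0 where "K0 = cmnorm (\<Omega> \<times> \<Omega>) 0 k"
  have kbd: "\<forall>a\<in>closure \<Omega>. \<forall>b\<in>closure \<Omega>. \<bar>k (a, b)\<bar> \<le> K0"
  proof -
    have "compact (closure \<Omega> \<times> closure \<Omega>)" using bnd by (simp add: compact_Times compact_closure)
    then have "bounded (k ` (closure \<Omega> \<times> closure \<Omega>))" using kCm(1)
      by (simp add: compact_continuous_image compact_imp_bounded)
    then obtain B where B: "\<forall>v\<in>k ` (closure \<Omega> \<times> closure \<Omega>). norm v \<le> B" unfolding bounded_iff by blast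
    have sub: "\<Omega> \<times> \<Omega> \<subseteq> closure \<Omega> \<times> closure \<Omega>" using closure_subset by blast
    have bdd: "bdd_above ((\<lambda>z. \<bar>k z\<bar>) ` (\<Omega> \<times> \<Omega>))"
    proof (rule bdd_aboveI2)
      fix z assume "z \<in> \<Omega> \<times> \<Omega>"
      then have "k z \<in> k ` (closure \<Omega> \<times> closure \<Omega>)" using sub by blast
      then show "\<bar>k z\<bar> \<le> B" using B by (metis real_norm_def)
    qed
    have "\<forall>z\<in>\<Omega> \<times> \<Omega>. \<bar>k z\<bar> \<le> K0"
    proof
      fix z assume "z \<in> \<Omega> \<times> \<Omega>"
      then show "\<bar>k z\<bar> \<le> K0" unfolding K0_def cmnorm_0 by (rule cSUP_upper[OF _ bdd])
    qed
    moreover have "continuous_on (closure (\<Omega> \<times> \<Omega>)) (\<lambda>z. \<bar>k z\<bar>)"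
      using continuous_on_rabs[OF kCm(1)] by (simp add: closure_Times)
    ultimately have "\<forall>z\<in>closure (\<Omega> \<times> \<Omega>). \<bar>k z\<bar> \<le> K0" by (intro closure_ext_le)
    then show ?thesis by (simp add: closure_Times)
  qed
  have Fk2: "UCm \<Omega> (closure \<Omega>) q (\<lambda>p y. k (p, y))"
    by (rule sec2[OF opn bnd kCm(2) kCm(1)]) simp
  have Fk1: "UCm \<Omega> (closure \<Omega>) q (\<lambda>p y. k (y, p))"
  proof -
    have "CmExt (\<Omega> \<times> \<Omega>) q (\<lambda>z. k (prod.swap z))" by (rule CmExt_swap[OF kCm(2)])
    moreover have "continuous_on (closure \<Omega> \<times> closure \<Omega>) (\<lambda>z. k (prod.swap z))"
      by (rule continuous_on_compose2[OF kCm(1)]) (auto intro!: continuous_intros)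
    ultimately have "UCm \<Omega> (closure \<Omega>) q (\<lambda>p y. k (prod.swap (p, y)))"
      by (intro sec2[OF opn bnd]) auto
    then show ?thesis by simp
  qed
  have Fu: "UCm \<Omega> P q (\<lambda>_. u)" for P :: "'b set" by (rule UCm_const[OF bnd uCm(2)])
  have Fv1: "UCm \<Omega> (closure \<Omega>) qw (\<lambda>p y. k (p, y) * u y)"
    using UCm_mult[OF opn Fk2 Fu] A(16) by (rule UCm_mono)
  have Fv2: "UCm \<Omega> (closure \<Omega>) qR (\<lambda>p y. k (y, p))"
    using Fk1 A(22) by (rule UCm_mono)
  have Fv3: "UCm \<Omega> (closure \<Omega> \<times> closure \<Omega>) qw (\<lambda>pz y. k (fst pz, y) * k (y, snd pz))"
  proof -
    have a: "UCm \<Omega> (closure \<Omega> \<times> closure \<Omega>) q (\<lambda>pz y. k (fst pz, y))"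
      by (rule UCm_reindex[OF Fk2, of fst "closure \<Omega> \<times> closure \<Omega>", simplified]) auto
    have b: "UCm \<Omega> (closure \<Omega> \<times> closure \<Omega>) q (\<lambda>pz y. k (y, snd pz))"
      by (rule UCm_reindex[OF Fk1, of snd "closure \<Omega> \<times> closure \<Omega>", simplified]) auto
    show ?thesis using UCm_mult[OF opn a b] A(16) by (rule UCm_mono)
  qed
  obtain B1 where B1: "\<forall>p\<in>closure \<Omega>. cmnorm \<Omega> qw (\<lambda>y. k (p, y) * u y) \<le> B1"
    using UCm_cmnorm_bound[OF ne Fv1] by blast
  obtain B2' where B2': "\<forall>p\<in>closure \<Omega>. cmnorm \<Omega> qR (\<lambda>y. k (y, p)) \<le> B2'"
    using UCm_cmnorm_bound[OF ne Fv2] by blast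
  obtain B3' where B3': "\<forall>pz\<in>closure \<Omega> \<times> closure \<Omega>. cmnorm \<Omega> qw (\<lambda>y. k (fst pz, y) * k (y, snd pz)) \<le> B3'"
    using UCm_cmnorm_bound[OF ne Fv3] by blast
  define B2 where "B2 = max B2' 0"
  define B3 where "B3 = max B3' 0"
  have B2: "\<forall>p\<in>closure \<Omega>. cmnorm \<Omega> qR (\<lambda>y. k (y, p)) \<le> B2" "0 \<le> B2" using B2' unfolding B2_def by force+
  have B3: "\<forall>x\<in>closure \<Omega>. \<forall>z\<in>closure \<Omega>. cmnorm \<Omega> qw (\<lambda>y. k (x, y) * k (y, z)) \<le> B3" "0 \<le> B3"
    using B3' unfolding B3_def by force+
  have kx_cont: "continuous_on (closure \<Omega>) (\<lambda>y. k (x, y))" if "x \<in> closure \<Omega>" for x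
    by (rule continuous_on_compose2[OF kCm(1)]) (use that in \<open>auto intro!: continuous_intros\<close>)
  have ky_cont: "continuous_on (closure \<Omega>) (\<lambda>y. k (y, z))" if "z \<in> closure \<Omega>" for z
    by (rule continuous_on_compose2[OF kCm(1)]) (use that in \<open>auto intro!: continuous_intros\<close>)
  have cm_v1: "Cm \<Omega> qw (\<lambda>y. k (x, y) * u y)" if "x \<in> closure \<Omega>" for x
    unfolding Cm_def using UCm_CmExt[OF Fv1 that] continuous_on_mult[OF kx_cont[OF that] uCm(1)] by simp
  have cm_v2: "Cm \<Omega> qR (\<lambda>y. k (y, z))" if "z \<in> closure \<Omega>" for z
    unfolding Cm_def using UCm_CmExt[OF Fv2 that] ky_cont[OF that] by auto
  have cm_v3: "Cm \<Omega> qw (\<lambda>y. k (x, y) * k (y, z))" if "x \<in> closure \<Omega>" "z \<in> closure \<Omega>" for x z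
  proof -
    have "CmExt \<Omega> qw (\<lambda>y. k (fst (x, z), y) * k (y, snd (x, z)))" using UCm_CmExt[OF Fv3] that by blast
    then show ?thesis unfolding Cm_def using continuous_on_mult[OF kx_cont[OF that(1)] ky_cont[OF that(2)]] by simp
  qed
  have Fu1: "UCm \<Omega> {()} q (\<lambda>_. u)" by (rule Fu)
  have cm_uw: "Cm \<Omega> qw u" and cm_uR: "Cm \<Omega> qR u"
    unfolding Cm_def using UCm_CmExt[OF UCm_mono[OF Fu1 A(16)]] UCm_CmExt[OF UCm_mono[OF Fu1 A(22)]] uCm(1) by auto
  define Nu where "Nu = cmnorm \<Omega> q u"
  obtain x0 where x0: "x0 \<in> \<Omega>" "u x0 \<noteq> 0"
  proof (rule ccontr)
    assume "\<not> thesis"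
    then have u0: "\<forall>x\<in>\<Omega>. u x = 0" using that by blast
    have "\<forall>x\<in>\<Omega>. f x = 0"
    proof
      fix x assume x: "x \<in> \<Omega>"
      have "integral \<Omega> (\<lambda>y. k (x, y) * u y) = integral \<Omega> (\<lambda>y. 0)" using u0 by (intro integral_cong) auto
      have "f x = lam * u x - integral \<Omega> (\<lambda>y. k (x, y) * u y)" using A(10) x by simp
      then show "f x = 0" using x u0 \<open>integral \<Omega> (\<lambda>y. k (x, y) * u y) = integral \<Omega> (\<lambda>y. 0)\<close> by simp
    qed
    then have "\<forall>x\<in>\<Omega>. \<bar>f x\<bar> \<le> 0" by simp
    from closure_ext_le[OF continuous_on_rabs[OF fCm] this] have "\<forall>x\<in>closure \<Omega>. \<bar>f x\<bar> \<le> 0" .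
    then show False using A(7) by auto
  qed
  have Nuw: "0 < cmnorm \<Omega> qw u" "cmnorm \<Omega> qw u \<le> Nu"
  proof -
    have "\<bar>u x0\<bar> \<le> cmnorm \<Omega> qw u" using UCm_cmnorm_lower[OF ne UCm_mono[OF Fu1 A(16)] _ x0(1)] by simp
    then show "0 < cmnorm \<Omega> qw u" using x0(2) by linarith
    show "cmnorm \<Omega> qw u \<le> Nu" unfolding Nu_def using UCm_cmnorm_mono[OF ne Fu1 _ A(16)] by simp
  qed
  have NuR: "0 < cmnorm \<Omega> qR u" "cmnorm \<Omega> qR u \<le> Nu"
  proof -
    have "\<bar>u x0\<bar> \<le> cmnorm \<Omega> qR u" using UCm_cmnorm_lower[OF ne UCm_mono[OF Fu1 A(22)] _ x0(1)] by simp
    then show "0 < cmnorm \<Omega> qR u" using x0(2) by linarith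
    show "cmnorm \<Omega> qR u \<le> Nu" unfolding Nu_def using UCm_cmnorm_mono[OF ne Fu1 _ A(22)] by simp
  qed
  have Nu0: "0 < Nu" using Nuw by linarith
  have CQ0: "0 \<le> CQ"
  proof -
    have "(\<Sum>i<nY 1. \<bar>w 1 i\<bar>) \<le> CQ" using A(14) by simp
    moreover have "0 \<le> (\<Sum>i<nY 1. \<bar>w 1 i\<bar>)" by (rule sum_nonneg) simp
    ultimately show ?thesis by linarith
  qed
  obtain CI' where CIb': "\<forall>hX>0. \<forall>hY>0. \<forall>i<nY hY. (\<Sum>j<nX hX. \<bar>R hX hY i j\<bar>) \<le> CI'" using A(20) by blast
  define CI where "CI = max CI' 0"
  have CIb: "\<forall>hX>0. \<forall>hY>0. \<forall>i<nY hY. (\<Sum>j<nX hX. \<bar>R hX hY i j\<bar>) \<le> CI" and CI0: "0 \<le> CI"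
    using CIb' unfolding CI_def by (auto intro: le_max_iff_disj[THEN iffD2])
  have Cw0: "0 \<le> Cw"
  proof -
    have "\<bar>integral \<Omega> u - (\<Sum>i<nY 1. w 1 i * u (Y 1 i))\<bar> \<le> Cw * 1 ^ qw * cmnorm \<Omega> qw u"
      using A(17)[rule_format, of 1 u] cm_uw by simp
    then have "0 \<le> Cw * cmnorm \<Omega> qw u" by (metis abs_ge_zero mult_1 order_trans power_one mult.commute)
    then show ?thesis using Nuw(1) by (simp add: zero_le_mult_iff)
  qed
  have CR0: "0 \<le> CR"
  proof -
    have "eventually (\<lambda>h. 1 \<le> nY h) (at_right 0)" using A(13) unfolding filterlim_at_top by blast
    then obtain b :: real where b: "b > 0" "\<forall>y>0. y < b \<longrightarrow> 1 \<le> nY y" unfolding eventually_at_right_field by blast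
    define h1 where "h1 = b / 2"
    have h1: "h1 > 0" "0 < nY h1" using b(1) b(2)[rule_format, of "b/2"] unfolding h1_def by auto
    have "\<bar>u (Y h1 0) - (\<Sum>j<nX 1. R 1 h1 0 j * u (X 1 j))\<bar> \<le> CR * 1 ^ qR * cmnorm \<Omega> qR u"
      using A(23)[rule_format, of 1 h1 u 0] cm_uR h1 by simp
    then have "0 \<le> CR * cmnorm \<Omega> qR u" by (metis abs_ge_zero mult_1 order_trans power_one mult.commute)
    then show ?thesis using NuR(1) by (simp add: zero_le_mult_iff)
  qed
  define Sk where "Sk = (SUP x'\<in>closure \<Omega>. cmnorm \<Omega> q (\<lambda>y. k (x', y)))"
  obtain Bq where Bq: "\<forall>p\<in>closure \<Omega>. cmnorm \<Omega> q (\<lambda>y. k (p, y)) \<le> Bq"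
    using UCm_cmnorm_bound[OF ne Fk2] by blast
  have bddS: "bdd_above ((\<lambda>x'. cmnorm \<Omega> q (\<lambda>y. k (x', y))) ` closure \<Omega>)"
    using Bq by (intro bdd_aboveI2) auto
  have Sk_ge: "cmnorm \<Omega> q (\<lambda>y. k (x', y)) \<le> Sk" if "x' \<in> closure \<Omega>" for x'
    unfolding Sk_def using that by (rule cSUP_upper[OF _ bddS])
  have Sk_lower: "\<bar>k (x', y)\<bar> \<le> Sk" if "x' \<in> closure \<Omega>" "y \<in> \<Omega>" for x' y
    using UCm_cmnorm_lower[OF ne Fk2 that] Sk_ge[OF that(1)] by simp
  have Sk0: "0 \<le> Sk" using Sk_lower[of x0 x0] x0(1) closure_subset by force
  have B10: "0 \<le> B1"
    using UCm_cmnorm_nonneg[OF ne Fv1, of x0] B1 x0(1) closure_subset by force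
  define C1 where "C1 = (if Sk > 0 then B1 / (Sk * Nu) else 0)"
  have C10: "0 \<le> C1" unfolding C1_def using B10 Sk0 Nu0 by auto
  have quadC1: "\<bar>integral \<Omega> (\<lambda>y. k (x, y) * u y) - (\<Sum>i<nY hY. w hY i * (k (x, Y hY i) * u (Y hY i)))\<bar>
      \<le> Cw * hY ^ qw * (C1 * Sk * Nu)" if x: "x \<in> closure \<Omega>" and hY: "hY > 0" for x hY
  proof (cases "Sk > 0")
    case True
    have "\<bar>integral \<Omega> (\<lambda>y. k (x, y) * u y) - (\<Sum>i<nY hY. w hY i * (k (x, Y hY i) * u (Y hY i)))\<bar>
        \<le> Cw * hY ^ qw * cmnorm \<Omega> qw (\<lambda>y. k (x, y) * u y)"
      using A(17) hY cm_v1[OF x] by blast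
    also have "\<dots> \<le> Cw * hY ^ qw * B1" using B1 x Cw0 hY by (intro mult_left_mono) auto
    also have "B1 = C1 * Sk * Nu" unfolding C1_def using True Nu0 by simp
    finally show ?thesis .
  next
    case False
    then have Sk00: "Sk = 0" using Sk0 by simp
    have "\<forall>y\<in>\<Omega>. \<bar>k (x, y)\<bar> \<le> 0" using Sk_lower[OF x] Sk00 by simp
    from closure_ext_le[OF continuous_on_rabs[OF kx_cont[OF x]] this]
    have kz: "\<forall>y\<in>closure \<Omega>. k (x, y) = 0" by simp
    have "integral \<Omega> (\<lambda>y. k (x, y) * u y) = integral \<Omega> (\<lambda>y. 0)"
      using kz closure_subset by (intro integral_cong) auto
    moreover have "(\<Sum>i<nY hY. w hY i * (k (x, Y hY i) * u (Y hY i))) = 0"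
      using kz A(11) hY by (intro sum.neutral) auto
    ultimately show ?thesis using Sk00 by simp
  qed
  obtain M where M: "\<forall>v. continuous_on (closure \<Omega>) v \<longrightarrow>
        sup_norm (closure \<Omega>) v \<le> M * sup_norm (closure \<Omega>) (intop \<Omega> k lam v)"
    using A(8) unfolding notin_spectrum_def by blast
  define Mr where "Mr = \<bar>M\<bar>"
  have Mr0: "0 \<le> Mr" unfolding Mr_def by simp
  have cne: "closure \<Omega> \<noteq> {}" using ne closure_subset by auto
  have res: "\<forall>x\<in>closure \<Omega>. \<bar>v x\<bar> \<le> Mr * b"
    if v: "continuous_on (closure \<Omega>) v" and bv: "\<forall>x\<in>closure \<Omega>. \<bar>intop \<Omega> k lam v x\<bar> \<le> b" for v b
  proof
    fix x assume x: "x \<in> closure \<Omega>"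
    have "compact (closure \<Omega>)" using bnd by (simp add: compact_closure)
    then have "bounded (v ` closure \<Omega>)" using v by (simp add: compact_continuous_image compact_imp_bounded)
    then obtain Bv where Bv: "\<forall>z\<in>v ` closure \<Omega>. norm z \<le> Bv" unfolding bounded_iff by blast
    have bddv: "bdd_above ((\<lambda>x. \<bar>v x\<bar>) ` closure \<Omega>)" using Bv by (intro bdd_aboveI2) auto
    have "\<bar>v x\<bar> \<le> sup_norm (closure \<Omega>) v" unfolding sup_norm_def by (rule cSUP_upper[OF x bddv])
    also have "\<dots> \<le> M * sup_norm (closure \<Omega>) (intop \<Omega> k lam v)" using M v by blast
    also have "\<dots> \<le> Mr * b"
    proof -
      have s1: "sup_norm (closure \<Omega>) (intop \<Omega> k lam v) \<le> b"
        unfolding sup_norm_def using bv cne by (intro cSUP_least) auto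
      have bddi: "bdd_above ((\<lambda>x. \<bar>intop \<Omega> k lam v x\<bar>) ` closure \<Omega>)" using bv by (intro bdd_aboveI2) auto
      have s0: "0 \<le> sup_norm (closure \<Omega>) (intop \<Omega> k lam v)"
        unfolding sup_norm_def using cSUP_upper[OF x bddi] by (meson abs_ge_zero order_trans)
      have "M * sup_norm (closure \<Omega>) (intop \<Omega> k lam v) \<le> Mr * sup_norm (closure \<Omega>) (intop \<Omega> k lam v)"
        unfolding Mr_def using s0 by (intro mult_right_mono) auto
      also have "\<dots> \<le> Mr * b" using s1 Mr0 by (intro mult_left_mono)
      finally show ?thesis .
    qed
    finally show "\<bar>v x\<bar> \<le> Mr * b" .
  qed
  define Lam where "Lam = CQ * CI * (CQ * K0 * CR * B2 + Cw * B3)"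
  have K00: "0 \<le> K0" using kbd x0(1) closure_subset by (meson abs_ge_zero order_trans subsetD)
  have Lam0: "0 \<le> Lam" unfolding Lam_def using CQ0 CI0 K00 CR0 B2(2) Cw0 B3(2) by simp
  define \<delta> where "\<delta> = min 1 (\<bar>lam\<bar> / (2 * (Mr * Lam + 1)))"
  have lamp: "0 < \<bar>lam\<bar>" using A(4) by simp
  have ML0: "0 \<le> Mr * Lam" using Mr0 Lam0 by simp
  have \<delta>0: "0 < \<delta>" unfolding \<delta>_def using lamp ML0 by simp
  have \<delta>1: "\<delta> \<le> 1" unfolding \<delta>_def by simp
  have \<delta>s: "Mr * Lam * \<delta> \<le> \<bar>lam\<bar> / 2"
  proof -
    have "Mr * Lam * \<delta> \<le> Mr * Lam * (\<bar>lam\<bar> / (2 * (Mr * Lam + 1)))"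
      unfolding \<delta>_def using ML0 by (intro mult_left_mono) auto
    also have "\<dots> = (\<bar>lam\<bar> / 2) * (Mr * Lam / (Mr * Lam + 1))" using ML0 by (simp add: field_simps)
    also have "\<dots> \<le> (\<bar>lam\<bar> / 2) * 1" using ML0 lamp by (intro mult_left_mono) auto
    finally show ?thesis by simp
  qed
  define M1 where "M1 = 2 * (1 + Mr * (CQ * (K0 * CI))) / \<bar>lam\<bar>"
  have M10: "0 \<le> M1" unfolding M1_def using Mr0 CQ0 K00 CI0 by simp
  define Cc where "Cc = (1 + CQ * (K0 * CI) * M1) / \<bar>lam\<bar> * (C1 + 1)"
  have Cc0: "0 < Cc"
  proof -
    have "0 \<le> CQ * (K0 * CI) * M1" using CQ0 K00 CI0 M10 by simp
    then have "0 < 1 + CQ * (K0 * CI) * M1" by linarith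
    moreover have "0 < C1 + 1" using C10 by linarith
    ultimately show ?thesis unfolding Cc_def using lamp by (intro mult_pos_pos divide_pos_pos)
  qed
  define Mb where "Mb = (\<bar>lam\<bar> + CQ * (K0 * CI)) * M1"
  have main: "let A = sysmat lam k (X hX) (Y hY) (nY hY) (w hY) (R hX hY) in
       (\<exists>uh. \<forall>i<nX hX. (\<Sum>j<nX hX. A i j * uh j) = f (X hX i))
     \<and> (\<forall>uh uh'. (\<forall>i<nX hX. (\<Sum>j<nX hX. A i j * uh j) = f (X hX i))
                \<and> (\<forall>i<nX hX. (\<Sum>j<nX hX. A i j * uh' j) = f (X hX i))
                \<longrightarrow> (\<forall>j<nX hX. uh j = uh' j))
     \<and> cond_inf (nX hX) A \<le> Mb
     \<and> (\<forall>uh. (\<forall>i<nX hX. (\<Sum>j<nX hX. A i j * uh j) = f (X hX i)) \<longrightarrow>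
          (\<forall>x\<in>closure \<Omega>.
             \<bar>u x - nystrom lam k f (Y hY) (nY hY) (nX hX) (w hY) (R hX hY) uh x\<bar>
             \<le> Cc * (Cw * Sk * hY ^ qw + CQ * CR * K0 * hX ^ qR) * Nu))"
    if hX: "0 < hX" "hX < \<delta>" and hY: "0 < hY" "hY < \<delta>" for hX hY
  proof -
    define Eps where "Eps = CQ * (K0 * (CR * hX ^ qR * B2)) + Cw * hY ^ qw * B3"
    have pX: "0 \<le> hX ^ qR" "hX ^ qR \<le> \<delta>"
    proof -
      show "0 \<le> hX ^ qR" using hX by simp
      have "hX ^ qR \<le> hX ^ 1" using A(21) hX \<delta>1 by (intro power_decreasing) auto
      then show "hX ^ qR \<le> \<delta>" using hX by simp
    qed
    have pY: "0 \<le> hY ^ qw" "hY ^ qw \<le> \<delta>"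
    proof -
      show "0 \<le> hY ^ qw" using hY by simp
      have "hY ^ qw \<le> hY ^ 1" using A(15) hY \<delta>1 by (intro power_decreasing) auto
      then show "hY ^ qw \<le> \<delta>" using hY by simp
    qed
    have Eps0: "0 \<le> Eps" unfolding Eps_def using CQ0 K00 CR0 pX(1) B2(2) Cw0 pY(1) B3(2) by simp
    have Epsd: "Eps \<le> (CQ * K0 * CR * B2 + Cw * B3) * \<delta>"
    proof -
      have "CQ * (K0 * (CR * hX ^ qR * B2)) \<le> CQ * (K0 * (CR * \<delta> * B2))"
        using pX CQ0 K00 CR0 B2(2) by (intro mult_left_mono mult_right_mono) auto
      moreover have "Cw * hY ^ qw * B3 \<le> Cw * \<delta> * B3"
        using pY Cw0 B3(2) by (intro mult_left_mono mult_right_mono) auto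
      ultimately show ?thesis unfolding Eps_def by (simp add: algebra_simps)
    qed
    have small: "Mr * (CQ * CI * Eps) \<le> \<bar>lam\<bar> / 2"
    proof -
      have "Mr * (CQ * CI * Eps) \<le> Mr * (CQ * CI * ((CQ * K0 * CR * B2 + Cw * B3) * \<delta>))"
        using Epsd Mr0 CQ0 CI0 by (intro mult_left_mono) auto
      also have "\<dots> = Mr * Lam * \<delta>" unfolding Lam_def by (simp add: mult_ac)
      finally show ?thesis using \<delta>s by simp
    qed
    have Eb: "\<forall>x\<in>closure \<Omega>. \<forall>l<nY hY. \<bar>(\<Sum>i<nY hY. w hY i * k (x, Y hY i) * (\<Sum>j<nX hX. R hX hY i j * k (X hX j, Y hY l)))
                 - integral \<Omega> (\<lambda>y. k (x, y) * k (y, Y hY l))\<bar> \<le> Eps"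
    proof (intro ballI allI impI)
      fix x l assume x: "x \<in> closure \<Omega>" and l: "l < nY hY"
      define z where "z = Y hY l"
      have z: "z \<in> closure \<Omega>" unfolding z_def using A(11) hY l by blast
      define T1 where "T1 = (\<Sum>i<nY hY. w hY i * (k (x, Y hY i) * ((\<Sum>j<nX hX. R hX hY i j * k (X hX j, z)) - k (Y hY i, z))))"
      define T2 where "T2 = (\<Sum>i<nY hY. w hY i * (k (x, Y hY i) * k (Y hY i, z))) - integral \<Omega> (\<lambda>y. k (x, y) * k (y, z))"
      have eq: "(\<Sum>i<nY hY. w hY i * k (x, Y hY i) * (\<Sum>j<nX hX. R hX hY i j * k (X hX j, z)))
                 - integral \<Omega> (\<lambda>y. k (x, y) * k (y, z)) = T1 + T2"
        unfolding T1_def T2_def by (simp add: algebra_simps sum.distrib sum_subtractf)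
      have "\<bar>T1\<bar> \<le> CQ * (K0 * (CR * hX ^ qR * B2))"
        unfolding T1_def
      proof (rule wsum_bound_gen)
        show "(\<Sum>i<nY hY. \<bar>w hY i\<bar>) \<le> CQ" using A(14) hY by blast
        show "0 \<le> K0 * (CR * hX ^ qR * B2)" using K00 CR0 pX(1) B2(2) by simp
        show "\<forall>i<nY hY. \<bar>k (x, Y hY i) * ((\<Sum>j<nX hX. R hX hY i j * k (X hX j, z)) - k (Y hY i, z))\<bar>
              \<le> K0 * (CR * hX ^ qR * B2)"
        proof (intro allI impI)
          fix i assume i: "i < nY hY"
          have yi: "Y hY i \<in> closure \<Omega>" using A(11) hY i by blast
          have "\<bar>k (Y hY i, z) - (\<Sum>j<nX hX. R hX hY i j * k (X hX j, z))\<bar> \<le> CR * hX ^ qR * cmnorm \<Omega> qR (\<lambda>y. k (y, z))"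
            using A(23)[rule_format, OF hX(1) hY(1) cm_v2[OF z] i] by simp
          also have "\<dots> \<le> CR * hX ^ qR * B2" using B2(1) z CR0 pX(1) by (intro mult_left_mono) auto
          finally have r: "\<bar>(\<Sum>j<nX hX. R hX hY i j * k (X hX j, z)) - k (Y hY i, z)\<bar> \<le> CR * hX ^ qR * B2"
            by (simp add: abs_minus_commute)
          have "\<bar>k (x, Y hY i)\<bar> \<le> K0" using kbd x yi by blast
          then show "\<bar>k (x, Y hY i) * ((\<Sum>j<nX hX. R hX hY i j * k (X hX j, z)) - k (Y hY i, z))\<bar>
              \<le> K0 * (CR * hX ^ qR * B2)" unfolding abs_mult using r by (intro mult_mono) auto
        qed
      qed
      moreover have "\<bar>T2\<bar> \<le> Cw * hY ^ qw * B3"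
      proof -
        have "\<bar>T2\<bar> = \<bar>integral \<Omega> (\<lambda>y. k (x, y) * k (y, z)) - (\<Sum>i<nY hY. w hY i * (k (x, Y hY i) * k (Y hY i, z)))\<bar>"
          unfolding T2_def by (simp add: abs_minus_commute)
        also have "\<dots> \<le> Cw * hY ^ qw * cmnorm \<Omega> qw (\<lambda>y. k (x, y) * k (y, z))"
          using A(17)[rule_format, OF hY(1) cm_v3[OF x z]] by simp
        also have "\<dots> \<le> Cw * hY ^ qw * B3" using B3(1) x z Cw0 pY(1) by (intro mult_left_mono) auto
        finally show ?thesis .
      qed
      ultimately show "\<bar>(\<Sum>i<nY hY. w hY i * k (x, Y hY i) * (\<Sum>j<nX hX. R hX hY i j * k (X hX j, Y hY l)))
                 - integral \<Omega> (\<lambda>y. k (x, y) * k (y, Y hY l))\<bar> \<le> Eps"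
      proof -
        have "\<bar>T1 + T2\<bar> \<le> \<bar>T1\<bar> + \<bar>T2\<bar>" by (rule abs_triangle_ineq)
        then show ?thesis using eq \<open>\<bar>T1\<bar> \<le> _\<close> \<open>\<bar>T2\<bar> \<le> _\<close> unfolding Eps_def z_def[symmetric] by linarith
      qed
    qed
    interpret D: disc \<Omega> k lam "X hX" "Y hY" "nX hX" "nY hY" "w hY" "R hX hY" K0 CQ CI Mr Eps
    proof
      show "open \<Omega>" "bounded \<Omega>" "\<Omega> \<noteq> {}" by (fact opn, fact bnd, fact ne)
      show "continuous_on (closure \<Omega> \<times> closure \<Omega>) k" by (fact kCm(1))
      show "\<forall>a\<in>closure \<Omega>. \<forall>b\<in>closure \<Omega>. \<bar>k (a, b)\<bar> \<le> K0" by (fact kbd)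
      show "\<forall>j<nX hX. X hX j \<in> closure \<Omega>" using A(18) hX by blast
      show "\<forall>i<nY hY. Y hY i \<in> closure \<Omega>" using A(11) hY by blast
      show "(\<Sum>i<nY hY. \<bar>w hY i\<bar>) \<le> CQ" using A(14) hY by blast
      show "\<forall>i<nY hY. (\<Sum>j<nX hX. \<bar>R hX hY i j\<bar>) \<le> CI" using CIb hX hY by blast
      show "0 \<le> CI" "lam \<noteq> 0" "0 \<le> Mr" by (fact CI0, fact A(4), fact Mr0)
      show "\<And>v b. continuous_on (closure \<Omega>) v \<Longrightarrow> \<forall>x\<in>closure \<Omega>. \<bar>intop \<Omega> k lam v x\<bar> \<le> b
              \<Longrightarrow> \<forall>x\<in>closure \<Omega>. \<bar>v x\<bar> \<le> Mr * b" by (rule res)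
      show "\<forall>x\<in>closure \<Omega>. \<forall>l<nY hY. \<bar>(\<Sum>i<nY hY. w hY i * k (x, Y hY i) * (\<Sum>j<nX hX. R hX hY i j * k (X hX j, Y hY l)))
                 - integral \<Omega> (\<lambda>y. k (x, y) * k (y, Y hY l))\<bar> \<le> Eps" by (fact Eb)
      show "Mr * (CQ * CI * Eps) \<le> \<bar>lam\<bar> / 2" by (fact small)
      show "0 \<le> Eps" by (fact Eps0)
    qed
    let ?A = "sysmat lam k (X hX) (Y hY) (nY hY) (w hY) (R hX hY)"
    obtain B where B: "is_inverse (nX hX) ?A B" using D.A_inv by blast
    have e1: "\<exists>uh. \<forall>i<nX hX. (\<Sum>j<nX hX. ?A i j * uh j) = f (X hX i)"
    proof (intro exI allI impI)
      fix i assume i: "i < nX hX"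
      have "(\<Sum>j<nX hX. ?A i j * (\<Sum>l<nX hX. B j l * f (X hX l)))
          = (\<Sum>j<nX hX. \<Sum>l<nX hX. ?A i j * B j l * f (X hX l))"
        by (simp add: sum_distrib_left mult.assoc)
      also have "\<dots> = (\<Sum>l<nX hX. \<Sum>j<nX hX. ?A i j * B j l * f (X hX l))" by (rule sum.swap)
      also have "\<dots> = (\<Sum>l<nX hX. (\<Sum>j<nX hX. ?A i j * B j l) * f (X hX l))" by (simp add: sum_distrib_right)
      also have "\<dots> = (\<Sum>l<nX hX. (if i = l then f (X hX l) else 0))"
        using B i unfolding is_inverse_def by (intro sum.cong) auto
      also have "\<dots> = f (X hX i)" using i by simp
      finally show "(\<Sum>j<nX hX. ?A i j * (\<Sum>l<nX hX. B j l * f (X hX l))) = f (X hX i)" .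
    qed
    have e2: "\<forall>uh uh'. (\<forall>i<nX hX. (\<Sum>j<nX hX. ?A i j * uh j) = f (X hX i))
                \<and> (\<forall>i<nX hX. (\<Sum>j<nX hX. ?A i j * uh' j) = f (X hX i))
                \<longrightarrow> (\<forall>j<nX hX. uh j = uh' j)"
    proof (intro allI impI)
      fix uh uh' j
      assume s: "(\<forall>i<nX hX. (\<Sum>j<nX hX. ?A i j * uh j) = f (X hX i))
                \<and> (\<forall>i<nX hX. (\<Sum>j<nX hX. ?A i j * uh' j) = f (X hX i))" and j: "j < nX hX"
      have "\<forall>i<nX hX. \<bar>\<Sum>j<nX hX. ?A i j * (uh j - uh' j)\<bar> \<le> 0"
      proof (intro allI impI)
        fix i assume i: "i < nX hX"
        have "(\<Sum>j<nX hX. ?A i j * (uh j - uh' j)) = (\<Sum>j<nX hX. ?A i j * uh j) - (\<Sum>j<nX hX. ?A i j * uh' j)"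
          by (simp add: right_diff_distrib sum_subtractf)
        then show "\<bar>\<Sum>j<nX hX. ?A i j * (uh j - uh' j)\<bar> \<le> 0" using s i by simp
      qed
      from D.A_stab[OF order_refl this] j have "\<bar>uh j - uh' j\<bar> \<le> 0" by simp
      then show "uh j = uh' j" by simp
    qed
    have e3: "cond_inf (nX hX) ?A \<le> Mb" using D.A_cond unfolding Mb_def M1_def .
    have e4: "\<forall>uh. (\<forall>i<nX hX. (\<Sum>j<nX hX. ?A i j * uh j) = f (X hX i)) \<longrightarrow>
          (\<forall>x\<in>closure \<Omega>.
             \<bar>u x - nystrom lam k f (Y hY) (nY hY) (nX hX) (w hY) (R hX hY) uh x\<bar>
             \<le> Cc * (Cw * Sk * hY ^ qw + CQ * CR * K0 * hX ^ qR) * Nu)"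
    proof (intro allI impI ballI)
      fix uh x assume sol: "\<forall>i<nX hX. (\<Sum>j<nX hX. ?A i j * uh j) = f (X hX i)" and x: "x \<in> closure \<Omega>"
      define e where "e j = u (X hX j) - uh j" for j
      define Q where "Q = (\<lambda>y. lam * u y - f y - D.Kh (\<lambda>j. u (X hX j)) y)"
      define Eu where "Eu = Cw * hY ^ qw * (C1 * Sk * Nu) + CQ * (K0 * (CR * hX ^ qR * Nu))"
      have Eu0: "0 \<le> Eu" unfolding Eu_def using Cw0 pY(1) C10 Sk0 Nu0 CQ0 K00 CR0 pX(1) by simp
      have Qc: "continuous_on (closure \<Omega>) Q" unfolding Q_def
        by (intro continuous_on_diff continuous_on_mult continuous_on_const uCm(1) fCm D.Kh_cont)
      have QbO: "\<forall>y\<in>\<Omega>. \<bar>Q y\<bar> \<le> Eu"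
      proof
        fix y assume y: "y \<in> \<Omega>"
        have yc: "y \<in> closure \<Omega>" using y closure_subset by auto
        define Q1 where "Q1 = integral \<Omega> (\<lambda>t. k (y, t) * u t) - (\<Sum>i<nY hY. w hY i * (k (y, Y hY i) * u (Y hY i)))"
        define Q2 where "Q2 = (\<Sum>i<nY hY. w hY i * (k (y, Y hY i) * (u (Y hY i) - (\<Sum>j<nX hX. R hX hY i j * u (X hX j)))))"
        have "lam * u y - f y = integral \<Omega> (\<lambda>t. k (y, t) * u t)" using A(10) y by (simp add: algebra_simps)
        then have "Q y = Q1 + Q2" unfolding Q_def Q1_def Q2_def D.Kh_def
          by (simp add: algebra_simps sum.distrib sum_subtractf)
        moreover have "\<bar>Q1\<bar> \<le> Cw * hY ^ qw * (C1 * Sk * Nu)" unfolding Q1_def by (rule quadC1[OF yc hY(1)])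
        moreover have "\<bar>Q2\<bar> \<le> CQ * (K0 * (CR * hX ^ qR * Nu))" unfolding Q2_def
        proof (rule wsum_bound_gen)
          show "(\<Sum>i<nY hY. \<bar>w hY i\<bar>) \<le> CQ" using A(14) hY by blast
          show "0 \<le> K0 * (CR * hX ^ qR * Nu)" using K00 CR0 pX(1) Nu0 by simp
          show "\<forall>i<nY hY. \<bar>k (y, Y hY i) * (u (Y hY i) - (\<Sum>j<nX hX. R hX hY i j * u (X hX j)))\<bar>
                \<le> K0 * (CR * hX ^ qR * Nu)"
          proof (intro allI impI)
            fix i assume i: "i < nY hY"
            have yi: "Y hY i \<in> closure \<Omega>" using A(11) hY i by blast
            have "\<bar>u (Y hY i) - (\<Sum>j<nX hX. R hX hY i j * u (X hX j))\<bar> \<le> CR * hX ^ qR * cmnorm \<Omega> qR u"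
              using A(23)[rule_format, OF hX(1) hY(1) cm_uR i] by simp
            also have "\<dots> \<le> CR * hX ^ qR * Nu" using NuR(2) CR0 pX(1) by (intro mult_left_mono) auto
            finally have r: "\<bar>u (Y hY i) - (\<Sum>j<nX hX. R hX hY i j * u (X hX j))\<bar> \<le> CR * hX ^ qR * Nu" .
            have "\<bar>k (y, Y hY i)\<bar> \<le> K0" using kbd yc yi by blast
            then show "\<bar>k (y, Y hY i) * (u (Y hY i) - (\<Sum>j<nX hX. R hX hY i j * u (X hX j)))\<bar>
                \<le> K0 * (CR * hX ^ qR * Nu)" unfolding abs_mult using r by (intro mult_mono) auto
          qed
        qed
        moreover have "\<bar>Q1 + Q2\<bar> \<le> \<bar>Q1\<bar> + \<bar>Q2\<bar>" by (rule abs_triangle_ineq)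
        ultimately show "\<bar>Q y\<bar> \<le> Eu" unfolding Eu_def by linarith
      qed
      have Qb: "\<forall>y\<in>closure \<Omega>. \<bar>Q y\<bar> \<le> Eu"
        using closure_ext_le[OF continuous_on_rabs[OF Qc] QbO] .
      have tau: "\<forall>j<nX hX. \<bar>lam * e j - D.Kh e (X hX j)\<bar> \<le> Eu"
      proof (intro allI impI)
        fix j assume j: "j < nX hX"
        have "lam * uh j - D.Kh uh (X hX j) = f (X hX j)" using D.sys_eq[OF j, of uh] sol j by simp
        moreover have "D.Kh e (X hX j) = D.Kh (\<lambda>j. u (X hX j)) (X hX j) - D.Kh uh (X hX j)"
          unfolding e_def by (rule D.Kh_diff)
        ultimately have "lam * e j - D.Kh e (X hX j) = Q (X hX j)" unfolding Q_def e_def by (simp add: algebra_simps)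
        moreover have "X hX j \<in> closure \<Omega>" using A(18) hX j by blast
        ultimately show "\<bar>lam * e j - D.Kh e (X hX j)\<bar> \<le> Eu" using Qb by simp
      qed
      have eb: "\<forall>j<nX hX. \<bar>e j\<bar> \<le> M1 * Eu" using D.stab[OF Eu0 tau] unfolding M1_def .
      have nyseq: "nystrom lam k f (Y hY) (nY hY) (nX hX) (w hY) (R hX hY) uh x = (1 / lam) * (D.Kh uh x + f x)"
        unfolding nystrom_def D.Kh_def by simp
      have "lam * (u x - nystrom lam k f (Y hY) (nY hY) (nX hX) (w hY) (R hX hY) uh x) = Q x + D.Kh e x"
        unfolding nyseq Q_def e_def D.Kh_diff using A(4) by (simp add: algebra_simps)
      moreover have "\<bar>D.Kh e x\<bar> \<le> CQ * (K0 * (CI * (M1 * Eu)))"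
        using D.Kh_bound[OF _ eb x] M10 Eu0 by simp
      moreover have "\<bar>Q x + D.Kh e x\<bar> \<le> \<bar>Q x\<bar> + \<bar>D.Kh e x\<bar>" by (rule abs_triangle_ineq)
      moreover have "\<bar>Q x\<bar> \<le> Eu" using Qb x by blast
      ultimately have "\<bar>lam\<bar> * \<bar>u x - nystrom lam k f (Y hY) (nY hY) (nX hX) (w hY) (R hX hY) uh x\<bar>
          \<le> Eu + CQ * (K0 * (CI * (M1 * Eu)))" by (simp add: abs_mult[symmetric])
      also have "\<dots> = (1 + CQ * (K0 * CI) * M1) * Eu" by (simp add: algebra_simps)
      finally have fin1: "\<bar>u x - nystrom lam k f (Y hY) (nY hY) (nX hX) (w hY) (R hX hY) uh x\<bar>
          \<le> (1 + CQ * (K0 * CI) * M1) / \<bar>lam\<bar> * Eu" using lamp by (simp add: field_simps)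
      have "Eu \<le> (C1 + 1) * (Cw * Sk * hY ^ qw + CQ * CR * K0 * hX ^ qR) * Nu"
      proof -
        define a where "a = Cw * Sk * hY ^ qw * Nu"
        define bb where "bb = CQ * CR * K0 * hX ^ qR * Nu"
        have a0: "0 \<le> a" unfolding a_def using Cw0 Sk0 pY(1) Nu0 by simp
        have b0: "0 \<le> bb" unfolding bb_def using CQ0 CR0 K00 pX(1) Nu0 by simp
        have "Eu = C1 * a + bb" unfolding Eu_def a_def bb_def by (simp add: algebra_simps)
        also have "\<dots> \<le> (C1 + 1) * (a + bb)" using a0 b0 C10 by (simp add: algebra_simps)
        also have "\<dots> = (C1 + 1) * (Cw * Sk * hY ^ qw + CQ * CR * K0 * hX ^ qR) * Nu"
          unfolding a_def bb_def by (simp add: algebra_simps)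
        finally show ?thesis .
      qed
      moreover have "0 \<le> (1 + CQ * (K0 * CI) * M1) / \<bar>lam\<bar>" using CQ0 K00 CI0 M10 by simp
      ultimately have "(1 + CQ * (K0 * CI) * M1) / \<bar>lam\<bar> * Eu
          \<le> (1 + CQ * (K0 * CI) * M1) / \<bar>lam\<bar> * ((C1 + 1) * (Cw * Sk * hY ^ qw + CQ * CR * K0 * hX ^ qR) * Nu)"
        by (intro mult_left_mono)
      also have "\<dots> = Cc * (Cw * Sk * hY ^ qw + CQ * CR * K0 * hX ^ qR) * Nu" unfolding Cc_def by (simp add: mult_ac)
      finally show "\<bar>u x - nystrom lam k f (Y hY) (nY hY) (nX hX) (w hY) (R hX hY) uh x\<bar>
             \<le> Cc * (Cw * Sk * hY ^ qw + CQ * CR * K0 * hX ^ qR) * Nu" using fin1 by linarith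
    qed
    show ?thesis unfolding Let_def using e1 e2 e3 e4 by blast
  qed
  have final: "\<forall>hX hY. 0 < hX \<and> hX < \<delta> \<and> 0 < hY \<and> hY < \<delta> \<longrightarrow>
    (let A = sysmat lam k (X hX) (Y hY) (nY hY) (w hY) (R hX hY) in
       (\<exists>uh. \<forall>i<nX hX. (\<Sum>j<nX hX. A i j * uh j) = f (X hX i))
     \<and> (\<forall>uh uh'. (\<forall>i<nX hX. (\<Sum>j<nX hX. A i j * uh j) = f (X hX i))
                \<and> (\<forall>i<nX hX. (\<Sum>j<nX hX. A i j * uh' j) = f (X hX i))
                \<longrightarrow> (\<forall>j<nX hX. uh j = uh' j))
     \<and> cond_inf (nX hX) A \<le> Mb
     \<and> (\<forall>uh. (\<forall>i<nX hX. (\<Sum>j<nX hX. A i j * uh j) = f (X hX i)) \<longrightarrow>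
          (\<forall>x\<in>closure \<Omega>.
             \<bar>u x - nystrom lam k f (Y hY) (nY hY) (nX hX) (w hY) (R hX hY) uh x\<bar>
             \<le> Cc * (Cw * (SUP x'\<in>closure \<Omega>. cmnorm \<Omega> q (\<lambda>y. k (x', y))) * hY ^ qw
                     + CQ * CR * cmnorm (\<Omega> \<times> \<Omega>) 0 k * hX ^ qR) * cmnorm \<Omega> q u)))"
  proof (intro allI impI)
    fix hX hY assume h: "0 < hX \<and> hX < \<delta> \<and> 0 < hY \<and> hY < \<delta>"
    then show "let A = sysmat lam k (X hX) (Y hY) (nY hY) (w hY) (R hX hY) in
       (\<exists>uh. \<forall>i<nX hX. (\<Sum>j<nX hX. A i j * uh j) = f (X hX i))
     \<and> (\<forall>uh uh'. (\<forall>i<nX hX. (\<Sum>j<nX hX. A i j * uh j) = f (X hX i))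
                \<and> (\<forall>i<nX hX. (\<Sum>j<nX hX. A i j * uh' j) = f (X hX i))
                \<longrightarrow> (\<forall>j<nX hX. uh j = uh' j))
     \<and> cond_inf (nX hX) A \<le> Mb
     \<and> (\<forall>uh. (\<forall>i<nX hX. (\<Sum>j<nX hX. A i j * uh j) = f (X hX i)) \<longrightarrow>
          (\<forall>x\<in>closure \<Omega>.
             \<bar>u x - nystrom lam k f (Y hY) (nY hY) (nX hX) (w hY) (R hX hY) uh x\<bar>
             \<le> Cc * (Cw * (SUP x'\<in>closure \<Omega>. cmnorm \<Omega> q (\<lambda>y. k (x', y))) * hY ^ qw
                     + CQ * CR * cmnorm (\<Omega> \<times> \<Omega>) 0 k * hX ^ qR) * cmnorm \<Omega> q u))"
      using main[of hX hY] unfolding Sk_def K0_def Nu_def by blast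
  qed
  show ?thesis using \<delta>0 Cc0 final by blast
qed

end
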